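(* Let $a<b$, $\alpha,\beta\in(0,1)$, $\xi,y_a,y_b\in\mathbb R$, $F,G\in C^1([a,b]\times\mathbb R^2;\mathbb R)$. Consider $$\mathcal J(y)={}_aI_b^\alpha\big[t\mapsto F(t,y(t),{}^C_aD_t^\beta[y](t))\big](b)\to\min,\quad \mathcal I(y)={}_aI_b^\alpha\big[t\mapsto G(t,y(t),{}^C_aD_t^\beta[y](t))\big](b)=\xi,\quad y(a)=y_a,\ y(b)=y_b,$$ over $y\in C^1([a,b])$ with ${}^C_aD_t^\beta[y]$ continuous on $[a,b]$. Let $y$ be a minimizer, write $[y](t)=(t,y(t),{}^C_aD_t^\beta[y](t))$, and assume for $L\in\{F,G\}$, with $g_L(t)=(b-t)^{\alpha-1}\partial_3L([y](t))$: $t\mapsto(b-t)^{\alpha-1}\partial_2L([y](t))$ and ${}_tD_b^\beta[g_L]$ are continuous on $(a,b)$; ${}_tI_b^{1-\beta}[g_L]$ is absolutely continuous on $[a,b]$; and either the kernel $(t,\tau)\mapsto(t-\tau)^{-\beta}/\Gamma(1-\beta)$ is square integrable on $\{a\le\tau<t\le b\}$ and $g_L\in L_2([a,b])$, or $g_L$ is continuous on $[a,b]$. If $y$ is not an extremal of $\mathcal I$, i.e. it is not true that $(b-t)^{\alpha-1}\partial_2G([y](t))+{}_tD_b^\beta[g_G](t)=0$ for all $t\in(a,b)$, then there exists $\lambda\in\mathbb R$ such that, with $H=F-\lambda G$, $$(b-t)^{\alpha-1}\partial_2H([y](t))+{}_tD_b^\beta\big[\tau\mapsto(b-\tau)^{\alpha-1}\partial_3H([y](\tau))\big](t)=0\quad\text{for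 all }t\in(a,b).$$
   Context: $\partial_iL$ denotes the partial derivative in the $i$-th argument. For $\mu\in(0,1)$: ${}_aI_t^\mu[f](t)=\frac1{\Gamma(\mu)}\int_a^t(t-\tau)^{\mu-1}f(\tau)d\tau$, ${}_tI_b^\mu[f](t)=\frac1{\Gamma(\mu)}\int_t^b(\tau-t)^{\mu-1}f(\tau)d\tau$, ${}_tD_b^\mu[f](t)=-\frac{d}{dt}{}_tI_b^{1-\mu}[f](t)$, ${}^C_aD_t^\mu[f](t)={}_aI_t^{1-\mu}[f'](t)$. ${}_aI_b^\alpha[h](b)$ means $\frac1{\Gamma(\alpha)}\int_a^b(b-t)^{\alpha-1}h(t)dt$. *)

theory Defs
  imports "HOL-Analysis.Analysis"
begin

definition lRLI :: "real \<Rightarrow> real \<Rightarrow> (real \<Rightarrow> real) \<Rightarrow> real \<Rightarrow> real" where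
  "lRLI mu a f t = (1 / Gamma mu) * integral {a..t} (\<lambda>\<tau>. (t - \<tau>) powr (mu - 1) * f \<tau>)"

definition rRLI :: "real \<Rightarrow> real \<Rightarrow> (real \<Rightarrow> real) \<Rightarrow> real \<Rightarrow> real" where
  "rRLI mu b f t = (1 / Gamma mu) * integral {t..b} (\<lambda>\<tau>. (\<tau> - t) powr (mu - 1) * f \<tau>)"

definition rRLD :: "real \<Rightarrow> real \<Rightarrow> (real \<Rightarrow> real) \<Rightarrow> real \<Rightarrow> real" where
  "rRLD mu b f t = - deriv (\<lambda>s. rRLI (1 - mu) b f s) t"

definition lCD :: "real \<Rightarrow> real \<Rightarrow> (real \<Rightarrow> real) \<Rightarrow> real \<Rightarrow> real" where
  "lCD mu a f t = lRLI (1 - mu) a (deriv f) t"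

definition d2 :: "(real \<Rightarrow> real \<Rightarrow> real \<Rightarrow> real) \<Rightarrow> real \<Rightarrow> real \<Rightarrow> real \<Rightarrow> real" where
  "d2 L t x v = deriv (\<lambda>z. L t z v) x"

definition d3 :: "(real \<Rightarrow> real \<Rightarrow> real \<Rightarrow> real) \<Rightarrow> real \<Rightarrow> real \<Rightarrow> real \<Rightarrow> real" where
  "d3 L t x v = deriv (\<lambda>w. L t x w) v"

definition C1_3 :: "real set \<Rightarrow> (real \<Rightarrow> real \<Rightarrow> real \<Rightarrow> real) \<Rightarrow> bool" where
  "C1_3 S L \<longleftrightarrow> (\<exists>L1 L2 L3.
     (\<forall>t\<in>S. \<forall>x v.
        ((\<lambda>s. L s x v) has_real_derivative L1 t x v) (at t within S) \<and>
        ((\<lambda>z. L t z v) has_real_derivative L2 t x v) (at x) \<and>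
        ((\<lambda>w. L t x w) has_real_derivative L3 t x v) (at v)) \<and>
     continuous_on (S \<times> UNIV \<times> UNIV) (\<lambda>(t, x, v). L1 t x v) \<and>
     continuous_on (S \<times> UNIV \<times> UNIV) (\<lambda>(t, x, v). L2 t x v) \<and>
     continuous_on (S \<times> UNIV \<times> UNIV) (\<lambda>(t, x, v). L3 t x v))"

definition C1_interval :: "real \<Rightarrow> real \<Rightarrow> (real \<Rightarrow> real) \<Rightarrow> bool" where
  "C1_interval a b y \<longleftrightarrow> (\<exists>y'. (\<forall>t\<in>{a..b}. (y has_real_derivative y' t) (at t within {a..b}))
      \<and> continuous_on {a..b} y')"

definition abs_cont_on :: "real \<Rightarrow> real \<Rightarrow> (real \<Rightarrow> real) \<Rightarrow> bool" where
  "abs_cont_on a b f \<longleftrightarrow> (\<forall>e>0. \<exists>d>0. \<forall>n::nat. \<forall>s u :: nat \<Rightarrow> real.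
     (\<forall>i<n. a \<le> s i \<and> s i \<le> u i \<and> u i \<le> b) \<and>
     (\<forall>i<n. \<forall>j<n. i \<noteq> j \<longrightarrow> u i \<le> s j \<or> u j \<le> s i) \<and>
     (\<Sum>i<n. u i - s i) < d \<longrightarrow> (\<Sum>i<n. \<bar>f (u i) - f (s i)\<bar>) < e)"

definition admissible :: "real \<Rightarrow> real \<Rightarrow> real \<Rightarrow> real \<Rightarrow> real \<Rightarrow> real \<Rightarrow>
    (real \<Rightarrow> real \<Rightarrow> real \<Rightarrow> real) \<Rightarrow> real \<Rightarrow> (real \<Rightarrow> real) \<Rightarrow> bool" where
  "admissible a b alpha beta ya yb G xi y \<longleftrightarrow>
     C1_interval a b y \<and> continuous_on {a..b} (lCD beta a y) \<and>
     y a = ya \<and> y b = yb \<and>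
     lRLI alpha a (\<lambda>t. G t (y t) (lCD beta a y t)) b = xi"

end

theory Submission
  imports Defs
begin
lemma kernel_has_integral:
  fixes a t p :: real
  assumes "a \<le> t" "p > -1"
  shows "((\<lambda>\<tau>. (t - \<tau>) powr p) has_integral (t - a) powr (p + 1) / (p + 1)) {a..t}"
proof -
  have h0: "((\<lambda>x. x powr p) has_integral (t - a) powr (p + 1) / (p + 1)) {0..t-a}"
    using has_integral_powr_from_0[of p "t-a"] assms by simp
  have h1: "((\<lambda>x. (-x) powr p) has_integral (t - a) powr (p + 1) / (p + 1)) {-(t-a)..-0}"
    using h0 has_integral_reflect_real[of "\<lambda>x. x powr p"] by blast
  have "((\<lambda>x. (\<lambda>x. (-x) powr p) (1 *\<^sub>R x + (-t))) has_integral ((t - a) powr (p + 1) / (p + 1)) /\<^sub>R 1 ^ DIM(real))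
        (cbox ((-(t-a) - (-t)) /\<^sub>R 1) ((-0 - (-t)) /\<^sub>R 1))"
    using h1 by (subst has_integral_affinity_iff) auto
  then show ?thesis by simp
qed

lemma kernel_integrable:
  fixes a t p :: real
  assumes "a \<le> t" "p > -1"
  shows "(\<lambda>\<tau>. (t - \<tau>) powr p) integrable_on {a..t}"
  using kernel_has_integral[OF assms] by blast

lemma kernel_abs_int:
  fixes a t p :: real
  assumes "a \<le> t" "p > -1"
  shows "(\<lambda>\<tau>. (t - \<tau>) powr p) absolutely_integrable_on {a..t}"
  by (rule nonnegative_absolutely_integrable_1[OF kernel_integrable[OF assms]]) auto

lemma kernel_prod_abs_int:
  fixes a t p :: real and f :: "real \<Rightarrow> real"
  assumes "a \<le> t" "p > -1" "continuous_on {a..t} f"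
  shows "(\<lambda>\<tau>. (t - \<tau>) powr p * f \<tau>) absolutely_integrable_on {a..t}"
proof -
  have "(\<lambda>\<tau>. f \<tau> * (t - \<tau>) powr p) absolutely_integrable_on {a..t}"
  proof (rule absolutely_integrable_bounded_measurable_product_real)
    show "f \<in> borel_measurable (lebesgue_on {a..t})"
      by (rule continuous_imp_measurable_on_sets_lebesgue[OF assms(3)]) auto
    show "bounded (f ` {a..t})"
      by (intro compact_imp_bounded compact_continuous_image assms(3)) auto
  qed (use kernel_abs_int[OF assms(1,2)] in auto)
  then show ?thesis by (simp add: mult.commute)
qed

lemma kernel_prod_integrable:
  fixes a t p :: real and f :: "real \<Rightarrow> real"
  assumes "a \<le> t" "p > -1" "continuous_on {a..t} f"
  shows "(\<lambda>\<tau>. (t - \<tau>) powr p * f \<tau>) integrable_on {a..t}"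
  using kernel_prod_abs_int[OF assms] absolutely_integrable_on_def by blast

lemma kernel_prod_bound:
  fixes a t p B :: real and f :: "real \<Rightarrow> real"
  assumes "a \<le> t" "p > -1" "continuous_on {a..t} f" "\<And>\<tau>. \<tau> \<in> {a..t} \<Longrightarrow> \<bar>f \<tau>\<bar> \<le> B"
  shows "\<bar>integral {a..t} (\<lambda>\<tau>. (t - \<tau>) powr p * f \<tau>)\<bar> \<le> B * ((t - a) powr (p + 1) / (p + 1))"
proof -
  have "norm (integral {a..t} (\<lambda>\<tau>. (t - \<tau>) powr p * f \<tau>)) \<le> integral {a..t} (\<lambda>\<tau>. B * (t - \<tau>) powr p)"
  proof (rule integral_norm_bound_integral)
    show "(\<lambda>\<tau>. (t - \<tau>) powr p * f \<tau>) integrable_on {a..t}" by (rule kernel_prod_integrable[OF assms(1-3)])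
    show "(\<lambda>\<tau>. B * (t - \<tau>) powr p) integrable_on {a..t}"
      using kernel_integrable[OF assms(1,2)] by (rule integrable_on_mult_right)
    fix x assume x: "x \<in> {a..t}"
    have "\<bar>(t - x) powr p * f x\<bar> = (t - x) powr p * \<bar>f x\<bar>" by (simp add: abs_mult)
    also have "\<dots> \<le> (t - x) powr p * B" by (intro mult_left_mono assms(4) x) auto
    finally show "norm ((t - x) powr p * f x) \<le> B * (t - x) powr p" by (simp add: mult.commute)
  qed
  also have "integral {a..t} (\<lambda>\<tau>. B * (t - \<tau>) powr p) = B * ((t - a) powr (p + 1) / (p + 1))"
    using integral_unique[OF kernel_has_integral[OF assms(1,2)]] by simp
  finally show ?thesis by simp
qed

lemma mv_bound:
  fixes f f' :: "real \<Rightarrow> real" and x h c e :: real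
  assumes der: "\<And>s. min x (x+h) \<le> s \<Longrightarrow> s \<le> max x (x+h) \<Longrightarrow> (f has_real_derivative f' s) (at s)"
    and bnd: "\<And>s. min x (x+h) \<le> s \<Longrightarrow> s \<le> max x (x+h) \<Longrightarrow> \<bar>f' s - c\<bar> \<le> e"
  shows "\<bar>f (x + h) - f x - c * h\<bar> \<le> e * \<bar>h\<bar>"
proof -
  define g where "g s = f s - c * s" for s
  have gder: "(g has_real_derivative (f' s - c)) (at s)" if "min x (x+h) \<le> s" "s \<le> max x (x+h)" for s
    unfolding g_def using der[OF that] by (auto intro!: derivative_eq_intros)
  consider "h = 0" | "h > 0" | "h < 0" by linarith
  then show ?thesis
  proof cases
    case 1 then show ?thesis by simp
  next
    case 2
    obtain z where z: "x < z" "z < x + h" "g (x+h) - g x = (x + h - x) * (f' z - c)"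
      using MVT2[of x "x+h" g "\<lambda>s. f' s - c"] gder 2 by auto
    have "f (x + h) - f x - c * h = h * (f' z - c)"
      using z(3) unfolding g_def by (simp add: algebra_simps)
    then have "\<bar>f (x + h) - f x - c * h\<bar> = \<bar>h\<bar> * \<bar>f' z - c\<bar>"
      by (simp add: abs_mult)
    also have "\<dots> \<le> \<bar>h\<bar> * e" using bnd[of z] z 2 by (intro mult_left_mono) auto
    finally show ?thesis by (simp add: mult.commute)
  next
    case 3
    obtain z where z: "x + h < z" "z < x" "g x - g (x+h) = (x - (x + h)) * (f' z - c)"
      using MVT2[of "x+h" x g "\<lambda>s. f' s - c"] gder 3 by auto
    have "f (x + h) - f x - c * h = h * (f' z - c)"
      using z(3) unfolding g_def by (simp add: algebra_simps)
    then have "\<bar>f (x + h) - f x - c * h\<bar> = \<bar>h\<bar> * \<bar>f' z - c\<bar>"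
      by (simp add: abs_mult)
    also have "\<dots> \<le> \<bar>h\<bar> * e" using bnd[of z] z 3 by (intro mult_left_mono) auto
    finally show ?thesis by (simp add: mult.commute)
  qed
qed

lemma unif_cont3:
  fixes L :: "real \<Rightarrow> real \<Rightarrow> real \<Rightarrow> real"
  assumes cont: "continuous_on ({a..b} \<times> UNIV \<times> UNIV) (\<lambda>(t, x, v). L t x v)" and e: "e > 0"
  shows "\<exists>d>0. \<forall>t\<in>{a..b}. \<forall>x v x' v'. \<bar>x\<bar> \<le> R \<longrightarrow> \<bar>v\<bar> \<le> R \<longrightarrow> \<bar>x'\<bar> \<le> R \<longrightarrow> \<bar>v'\<bar> \<le> R \<longrightarrow>
      \<bar>x' - x\<bar> + \<bar>v' - v\<bar> < d \<longrightarrow> \<bar>L t x' v' - L t x v\<bar> < e"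
proof -
  define K :: "(real \<times> real \<times> real) set" where "K = {a..b} \<times> cball 0 R \<times> cball 0 R"
  have "compact K" unfolding K_def by (intro compact_Times compact_Icc compact_cball)
  moreover have "continuous_on K (\<lambda>(t, x, v). L t x v)"
    by (rule continuous_on_subset[OF cont]) (auto simp: K_def)
  ultimately have "uniformly_continuous_on K (\<lambda>(t, x, v). L t x v)"
    using compact_uniformly_continuous by blast
  then obtain d where d: "d > 0" and dd: "\<And>p p'. p \<in> K \<Longrightarrow> p' \<in> K \<Longrightarrow> dist p' p < d \<Longrightarrow>
      dist ((\<lambda>(t, x, v). L t x v) p') ((\<lambda>(t, x, v). L t x v) p) < e"
    unfolding uniformly_continuous_on_def using e by metis
  show ?thesis
  proof (intro exI[of _ d] conjI d ballI allI impI)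
    fix t x v x' v' assume t: "t \<in> {a..b}" and h: "\<bar>x\<bar> \<le> R" "\<bar>v\<bar> \<le> R" "\<bar>x'\<bar> \<le> R" "\<bar>v'\<bar> \<le> R"
      and dl: "\<bar>x' - x\<bar> + \<bar>v' - v\<bar> < d"
    have "dist (t, x', v') (t, x, v) = sqrt ((dist x' x)\<^sup>2 + (dist v' v)\<^sup>2)"
      by (simp add: dist_Pair_Pair)
    also have "\<dots> \<le> \<bar>dist x' x\<bar> + \<bar>dist v' v\<bar>" by (rule sqrt_sum_squares_le_sum_abs)
    also have "\<dots> = \<bar>x' - x\<bar> + \<bar>v' - v\<bar>" by (simp add: dist_real_def)
    finally have "dist (t, x', v') (t, x, v) < d" using dl by linarith
    from dd[OF _ _ this] t h show "\<bar>L t x' v' - L t x v\<bar> < e"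
      by (auto simp: K_def dist_real_def)
  qed
qed

lemma bound3:
  fixes L :: "real \<Rightarrow> real \<Rightarrow> real \<Rightarrow> real"
  assumes cont: "continuous_on ({a..b} \<times> UNIV \<times> UNIV) (\<lambda>(t, x, v). L t x v)"
  shows "\<exists>B\<ge>0. \<forall>t\<in>{a..b}. \<forall>x v. \<bar>x\<bar> \<le> R \<longrightarrow> \<bar>v\<bar> \<le> R \<longrightarrow> \<bar>L t x v\<bar> \<le> B"
proof -
  define K :: "(real \<times> real \<times> real) set" where "K = {a..b} \<times> cball 0 R \<times> cball 0 R"
  have "compact K" unfolding K_def by (intro compact_Times compact_Icc compact_cball)
  moreover have "continuous_on K (\<lambda>(t, x, v). L t x v)"
    by (rule continuous_on_subset[OF cont]) (auto simp: K_def)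
  ultimately have "bounded ((\<lambda>(t, x, v). L t x v) ` K)"
    by (intro compact_imp_bounded compact_continuous_image)
  then obtain B where B: "\<And>p. p \<in> K \<Longrightarrow> norm ((\<lambda>(t, x, v). L t x v) p) \<le> B"
    unfolding bounded_iff by blast
  show ?thesis
  proof (intro exI[of _ "max B 0"] conjI ballI allI impI)
    fix t x v assume "t \<in> {a..b}" "\<bar>x\<bar> \<le> R" "\<bar>v\<bar> \<le> R"
    then have "(t, x, v) \<in> K" by (auto simp: K_def)
    from B[OF this] show "\<bar>L t x v\<bar> \<le> max B 0" by auto
  qed auto
qed

lemma remainder3:
  fixes L L2 L3 :: "real \<Rightarrow> real \<Rightarrow> real \<Rightarrow> real"
  assumes D2: "\<forall>t\<in>{a..b}. \<forall>x v. ((\<lambda>z. L t z v) has_real_derivative L2 t x v) (at x)"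
    and D3: "\<forall>t\<in>{a..b}. \<forall>x v. ((\<lambda>w. L t x w) has_real_derivative L3 t x v) (at v)"
    and C2: "continuous_on ({a..b} \<times> UNIV \<times> UNIV) (\<lambda>(t, x, v). L2 t x v)"
    and C3: "continuous_on ({a..b} \<times> UNIV \<times> UNIV) (\<lambda>(t, x, v). L3 t x v)"
    and e: "e > 0"
  shows "\<exists>d>0. \<forall>t\<in>{a..b}. \<forall>x v h k. \<bar>x\<bar> \<le> R \<longrightarrow> \<bar>v\<bar> \<le> R \<longrightarrow> \<bar>h\<bar> + \<bar>k\<bar> < d \<longrightarrow>
     \<bar>L t (x + h) (v + k) - L t x v - L2 t x v * h - L3 t x v * k\<bar> \<le> e * (\<bar>h\<bar> + \<bar>k\<bar>)"
proof -
  obtain d2 where d2: "d2 > 0" and dd2: "\<And>t x v x' v'. t \<in> {a..b} \<Longrightarrow> \<bar>x\<bar> \<le> R + 1 \<Longrightarrow> \<bar>v\<bar> \<le> R + 1 \<Longrightarrow>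
      \<bar>x'\<bar> \<le> R + 1 \<Longrightarrow> \<bar>v'\<bar> \<le> R + 1 \<Longrightarrow> \<bar>x' - x\<bar> + \<bar>v' - v\<bar> < d2 \<Longrightarrow> \<bar>L2 t x' v' - L2 t x v\<bar> < e"
    using unif_cont3[OF C2 e, of "R+1"] by blast
  obtain d3 where d3: "d3 > 0" and dd3: "\<And>t x v x' v'. t \<in> {a..b} \<Longrightarrow> \<bar>x\<bar> \<le> R + 1 \<Longrightarrow> \<bar>v\<bar> \<le> R + 1 \<Longrightarrow>
      \<bar>x'\<bar> \<le> R + 1 \<Longrightarrow> \<bar>v'\<bar> \<le> R + 1 \<Longrightarrow> \<bar>x' - x\<bar> + \<bar>v' - v\<bar> < d3 \<Longrightarrow> \<bar>L3 t x' v' - L3 t x v\<bar> < e"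
    using unif_cont3[OF C3 e, of "R+1"] by blast
  show ?thesis
  proof (intro exI[of _ "min 1 (min d2 d3)"] conjI ballI allI impI)
    show "0 < min 1 (min d2 d3)" using d2 d3 by simp
    fix t x v h k assume t: "t \<in> {a..b}" and x: "\<bar>x\<bar> \<le> R" and v: "\<bar>v\<bar> \<le> R"
      and hk: "\<bar>h\<bar> + \<bar>k\<bar> < min 1 (min d2 d3)"
    have s1: "\<bar>L t (x + h) (v + k) - L t (x + h) v - L3 t x v * k\<bar> \<le> e * \<bar>k\<bar>"
    proof (rule mv_bound[of v k "L t (x + h)" "L3 t (x + h)"])
      fix s assume "min v (v + k) \<le> s" "s \<le> max v (v + k)"
      then have s: "\<bar>s - v\<bar> \<le> \<bar>k\<bar>" by (auto simp: min_def max_def split: if_splits)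
      show "(L t (x + h) has_real_derivative L3 t (x + h) s) (at s)" using D3 t by blast
      have "\<bar>x + h\<bar> \<le> R + 1" "\<bar>s\<bar> \<le> R + 1" using x v hk s by arith+
      then have "\<bar>L3 t (x + h) s - L3 t x v\<bar> < e"
        by (intro dd3) (use t x v hk s in auto)
      then show "\<bar>L3 t (x + h) s - L3 t x v\<bar> \<le> e" by simp
    qed
    have s2: "\<bar>L t (x + h) v - L t x v - L2 t x v * h\<bar> \<le> e * \<bar>h\<bar>"
    proof (rule mv_bound[of x h "\<lambda>z. L t z v" "\<lambda>z. L2 t z v"])
      fix s assume "min x (x + h) \<le> s" "s \<le> max x (x + h)"
      then have s: "\<bar>s - x\<bar> \<le> \<bar>h\<bar>" by (auto simp: min_def max_def split: if_splits)
      show "((\<lambda>z. L t z v) has_real_derivative L2 t s v) (at s)" using D2 t by blast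
      have "\<bar>s\<bar> \<le> R + 1" "\<bar>s - x\<bar> < d2" using x v hk s by arith+
      then have "\<bar>L2 t s v - L2 t x v\<bar> < e"
        by (intro dd2) (use t x v hk s in auto)
      then show "\<bar>L2 t s v - L2 t x v\<bar> \<le> e" by simp
    qed
    have "\<bar>L t (x + h) (v + k) - L t x v - L2 t x v * h - L3 t x v * k\<bar>
        \<le> \<bar>L t (x + h) (v + k) - L t (x + h) v - L3 t x v * k\<bar> + \<bar>L t (x + h) v - L t x v - L2 t x v * h\<bar>"
      by linarith
    also have "\<dots> \<le> e * \<bar>k\<bar> + e * \<bar>h\<bar>" using s1 s2 by linarith
    finally show "\<bar>L t (x + h) (v + k) - L t x v - L2 t x v * h - L3 t x v * k\<bar> \<le> e * (\<bar>h\<bar> + \<bar>k\<bar>)"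
      by (simp add: algebra_simps)
  qed
qed

lemma lipschitz3:
  fixes L L2 L3 :: "real \<Rightarrow> real \<Rightarrow> real \<Rightarrow> real"
  assumes D2: "\<forall>t\<in>{a..b}. \<forall>x v. ((\<lambda>z. L t z v) has_real_derivative L2 t x v) (at x)"
    and D3: "\<forall>t\<in>{a..b}. \<forall>x v. ((\<lambda>w. L t x w) has_real_derivative L3 t x v) (at v)"
    and C2: "continuous_on ({a..b} \<times> UNIV \<times> UNIV) (\<lambda>(t, x, v). L2 t x v)"
    and C3: "continuous_on ({a..b} \<times> UNIV \<times> UNIV) (\<lambda>(t, x, v). L3 t x v)"
  shows "\<exists>B\<ge>0. \<forall>t\<in>{a..b}. \<forall>x v x' v'. \<bar>x\<bar> \<le> R \<longrightarrow> \<bar>v\<bar> \<le> R \<longrightarrow> \<bar>x'\<bar> \<le> R \<longrightarrow> \<bar>v'\<bar> \<le> R \<longrightarrow>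
     \<bar>L t x' v' - L t x v\<bar> \<le> B * (\<bar>x' - x\<bar> + \<bar>v' - v\<bar>)"
proof -
  obtain B2 where B2: "B2 \<ge> 0" "\<And>t x v. t \<in> {a..b} \<Longrightarrow> \<bar>x\<bar> \<le> R \<Longrightarrow> \<bar>v\<bar> \<le> R \<Longrightarrow> \<bar>L2 t x v\<bar> \<le> B2"
    using bound3[OF C2, of R] by blast
  obtain B3 where B3: "B3 \<ge> 0" "\<And>t x v. t \<in> {a..b} \<Longrightarrow> \<bar>x\<bar> \<le> R \<Longrightarrow> \<bar>v\<bar> \<le> R \<Longrightarrow> \<bar>L3 t x v\<bar> \<le> B3"
    using bound3[OF C3, of R] by blast
  show ?thesis
  proof (intro exI[of _ "max B2 B3"] conjI ballI allI impI)
    show "0 \<le> max B2 B3" using B2 by simp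
    fix t x v x' v' assume t: "t \<in> {a..b}" and h: "\<bar>x\<bar> \<le> R" "\<bar>v\<bar> \<le> R" "\<bar>x'\<bar> \<le> R" "\<bar>v'\<bar> \<le> R"
    have s1: "\<bar>L t x' (v + (v' - v)) - L t x' v - 0 * (v' - v)\<bar> \<le> B3 * \<bar>v' - v\<bar>"
    proof (rule mv_bound[of v "v' - v" "L t x'" "L3 t x'"])
      fix s assume "min v (v + (v' - v)) \<le> s" "s \<le> max v (v + (v' - v))"
      then have s: "\<bar>s\<bar> \<le> R" using h by (auto simp: min_def max_def split: if_splits)
      show "(L t x' has_real_derivative L3 t x' s) (at s)" using D3 t by blast
      show "\<bar>L3 t x' s - 0\<bar> \<le> B3" using B3(2)[OF t h(3) s] by simp
    qed
    have s2: "\<bar>L t (x + (x' - x)) v - L t x v - 0 * (x' - x)\<bar> \<le> B2 * \<bar>x' - x\<bar>"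
    proof (rule mv_bound[of x "x' - x" "\<lambda>z. L t z v" "\<lambda>z. L2 t z v"])
      fix s assume "min x (x + (x' - x)) \<le> s" "s \<le> max x (x + (x' - x))"
      then have s: "\<bar>s\<bar> \<le> R" using h by (auto simp: min_def max_def split: if_splits)
      show "((\<lambda>z. L t z v) has_real_derivative L2 t s v) (at s)" using D2 t by blast
      show "\<bar>L2 t s v - 0\<bar> \<le> B2" using B2(2)[OF t s h(2)] by simp
    qed
    have "\<bar>L t x' v' - L t x v\<bar> \<le> \<bar>L t x' v' - L t x' v\<bar> + \<bar>L t x' v - L t x v\<bar>" by linarith
    also have "\<dots> \<le> B3 * \<bar>v' - v\<bar> + B2 * \<bar>x' - x\<bar>" using s1 s2 by simp
    also have "\<dots> \<le> max B2 B3 * \<bar>v' - v\<bar> + max B2 B3 * \<bar>x' - x\<bar>"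
      by (intro add_mono mult_right_mono) auto
    finally show "\<bar>L t x' v' - L t x v\<bar> \<le> max B2 B3 * (\<bar>x' - x\<bar> + \<bar>v' - v\<bar>)"
      by (simp add: algebra_simps)
  qed
qed

lemma curve_cont3:
  fixes L L1 L2 L3 :: "real \<Rightarrow> real \<Rightarrow> real \<Rightarrow> real" and X V :: "real \<Rightarrow> real"
  assumes D1: "\<forall>t\<in>{a..b}. \<forall>x v. ((\<lambda>s. L s x v) has_real_derivative L1 t x v) (at t within {a..b})"
    and D2: "\<forall>t\<in>{a..b}. \<forall>x v. ((\<lambda>z. L t z v) has_real_derivative L2 t x v) (at x)"
    and D3: "\<forall>t\<in>{a..b}. \<forall>x v. ((\<lambda>w. L t x w) has_real_derivative L3 t x v) (at v)"
    and C2: "continuous_on ({a..b} \<times> UNIV \<times> UNIV) (\<lambda>(t, x, v). L2 t x v)"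
    and C3: "continuous_on ({a..b} \<times> UNIV \<times> UNIV) (\<lambda>(t, x, v). L3 t x v)"
    and X: "continuous_on {a..b} X" and V: "continuous_on {a..b} V"
  shows "continuous_on {a..b} (\<lambda>t. L t (X t) (V t))"
proof -
  have "bounded (X ` {a..b})" "bounded (V ` {a..b})"
    by (intro compact_imp_bounded compact_continuous_image X V compact_Icc)+
  then obtain R1 R2 where R1: "\<And>t. t \<in> {a..b} \<Longrightarrow> \<bar>X t\<bar> \<le> R1" and R2: "\<And>t. t \<in> {a..b} \<Longrightarrow> \<bar>V t\<bar> \<le> R2"
    unfolding bounded_iff by (metis imageI real_norm_def)
  define R where "R = max R1 R2"
  obtain B where B: "B \<ge> 0" "\<And>t x v x' v'. t \<in> {a..b} \<Longrightarrow> \<bar>x\<bar> \<le> R \<Longrightarrow> \<bar>v\<bar> \<le> R \<Longrightarrow> \<bar>x'\<bar> \<le> R \<Longrightarrow> \<bar>v'\<bar> \<le> R \<Longrightarrow>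
     \<bar>L t x' v' - L t x v\<bar> \<le> B * (\<bar>x' - x\<bar> + \<bar>v' - v\<bar>)"
    using lipschitz3[OF D2 D3 C2 C3, of R] by blast
  show ?thesis
    unfolding continuous_on_eq_continuous_within
  proof
    fix t0 assume t0: "t0 \<in> {a..b}"
    have c1: "continuous (at t0 within {a..b}) (\<lambda>t. L t (X t0) (V t0))"
      using D1 t0 DERIV_continuous by blast
    have cX: "((\<lambda>t. X t) \<longlongrightarrow> X t0) (at t0 within {a..b})"
      using X t0 by (simp add: continuous_on_def)
    have cV: "((\<lambda>t. V t) \<longlongrightarrow> V t0) (at t0 within {a..b})"
      using V t0 by (simp add: continuous_on_def)
    have z: "((\<lambda>t. B * (\<bar>X t - X t0\<bar> + \<bar>V t - V t0\<bar>)) \<longlongrightarrow> B * (\<bar>X t0 - X t0\<bar> + \<bar>V t0 - V t0\<bar>)) (at t0 within {a..b})"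
      by (intro tendsto_intros cX cV)
    have "((\<lambda>t. L t (X t) (V t) - L t (X t0) (V t0)) \<longlongrightarrow> 0) (at t0 within {a..b})"
    proof (rule Lim_null_comparison)
      show "\<forall>\<^sub>F t in at t0 within {a..b}. norm (L t (X t) (V t) - L t (X t0) (V t0)) \<le> B * (\<bar>X t - X t0\<bar> + \<bar>V t - V t0\<bar>)"
        unfolding eventually_at_filter
      proof (intro always_eventually allI impI)
        fix t assume "t \<noteq> t0" "t \<in> {a..b}"
        then show "norm (L t (X t) (V t) - L t (X t0) (V t0)) \<le> B * (\<bar>X t - X t0\<bar> + \<bar>V t - V t0\<bar>)"
        proof -
          have "\<bar>X t\<bar> \<le> R" "\<bar>V t\<bar> \<le> R" "\<bar>X t0\<bar> \<le> R" "\<bar>V t0\<bar> \<le> R"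
            using R1[of t] R2[of t] R1[of t0] R2[of t0] t0 \<open>t \<in> {a..b}\<close> unfolding R_def by fastforce+
          then show ?thesis using B(2)[of t "X t0" "V t0" "X t" "V t"] \<open>t \<in> {a..b}\<close> by simp
        qed
      qed
      show "((\<lambda>t. B * (\<bar>X t - X t0\<bar> + \<bar>V t - V t0\<bar>)) \<longlongrightarrow> 0) (at t0 within {a..b})"
        using z by simp
    qed
    moreover have "((\<lambda>t. L t (X t0) (V t0)) \<longlongrightarrow> L t0 (X t0) (V t0)) (at t0 within {a..b})"
      using c1 by (simp add: continuous_within)
    ultimately have "((\<lambda>t. (L t (X t) (V t) - L t (X t0) (V t0)) + L t (X t0) (V t0)) \<longlongrightarrow> 0 + L t0 (X t0) (V t0)) (at t0 within {a..b})"
      by (rule tendsto_add)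
    then show "continuous (at t0 within {a..b}) (\<lambda>t. L t (X t) (V t))"
      by (simp add: continuous_within)
  qed
qed

lemma msq_bound: "\<bar>(max 0 h)\<^sup>2 / h\<bar> \<le> \<bar>h::real\<bar>"
proof (cases "h > 0")
  case True
  then have "max 0 h = h" by (simp add: max_absorb2)
  then have "(max 0 h)\<^sup>2 / h = h" using True by (simp add: power2_eq_square)
  then show ?thesis by simp
next
  case False
  then have "max 0 h = 0" by (simp add: max_absorb1)
  then show ?thesis by simp
qed

lemma msq_deriv0: "((\<lambda>u::real. (max 0 u)\<^sup>2) has_real_derivative 2 * max 0 0) (at 0)"
proof -
    have "((\<lambda>h::real. (max 0 h)\<^sup>2 / h) \<longlongrightarrow> 0) (at 0)"
    proof (rule Lim_null_comparison)
      show "\<forall>\<^sub>F h in at 0. norm ((max 0 h)\<^sup>2 / (h::real)) \<le> \<bar>h\<bar>"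
        using msq_bound by (intro always_eventually allI) simp
      show "((\<lambda>h::real. \<bar>h\<bar>) \<longlongrightarrow> 0) (at 0)"
        using tendsto_rabs_zero[OF tendsto_ident_at[of "0::real" UNIV]] by simp
    qed
    moreover have "(\<lambda>h. ((max 0 (0 + h))\<^sup>2 - (max 0 (0::real))\<^sup>2) / h) = (\<lambda>h::real. (max 0 h)\<^sup>2 / h)"
      by simp
    ultimately show ?thesis by (simp add: DERIV_def)
qed

lemma msq_deriv: "((\<lambda>u::real. (max 0 u)\<^sup>2) has_real_derivative 2 * max 0 u) (at u)"
proof -
  consider "u > 0" | "u < 0" | "u = 0" by linarith
  then show ?thesis
  proof cases
    case 1
    have d: "((\<lambda>u::real. u\<^sup>2) has_real_derivative 2 * u) (at u)"
      using DERIV_pow[of 2 u] by simp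
    have e: "\<And>x::real. x \<in> {0<..} \<Longrightarrow> x\<^sup>2 = (max 0 x)\<^sup>2" by (auto simp: max_def)
    have u: "u \<in> {0<..}" using 1 by simp
    have "((\<lambda>u::real. (max 0 u)\<^sup>2) has_real_derivative 2 * u) (at u)"
      by (rule has_field_derivative_transform_within_open[OF d open_greaterThan u e])
    moreover have "max 0 u = u" using 1 by (simp add: max_absorb2)
    ultimately show ?thesis by (simp only:)
  next
    case 2
    have d: "((\<lambda>u::real. 0) has_real_derivative 0) (at u)" by simp
    have e: "\<And>x::real. x \<in> {..<0} \<Longrightarrow> 0 = (max 0 x)\<^sup>2" by (auto simp: max_def)
    have u: "u \<in> {..<0}" using 2 by simp
    have "((\<lambda>u::real. (max 0 u)\<^sup>2) has_real_derivative 0) (at u)"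
      by (rule has_field_derivative_transform_within_open[OF d open_lessThan u e])
    moreover have "max 0 u = 0" using 2 by (simp add: max_absorb1)
    ultimately show ?thesis by (simp only: mult_zero_right)
  next
    case 3
    show ?thesis unfolding 3 by (rule msq_deriv0)
  qed
qed

definition bump :: "real \<Rightarrow> real \<Rightarrow> real \<Rightarrow> real" where
  "bump c r t = (max 0 (r\<^sup>2 - (t - c)\<^sup>2))\<^sup>2"

definition bumpd :: "real \<Rightarrow> real \<Rightarrow> real \<Rightarrow> real" where
  "bumpd c r t = 2 * max 0 (r\<^sup>2 - (t - c)\<^sup>2) * (- 2 * (t - c))"

lemma bump_deriv: "(bump c r has_real_derivative bumpd c r t) (at t)"
proof -
  have "((\<lambda>t. r\<^sup>2 - (t - c)\<^sup>2) has_real_derivative (- 2 * (t - c))) (at t)"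
    by (auto intro!: derivative_eq_intros)
  from DERIV_chain2[OF msq_deriv this] show ?thesis
    unfolding bump_def bumpd_def by simp
qed

lemma deriv_bump: "deriv (bump c r) t = bumpd c r t"
  by (rule DERIV_imp_deriv[OF bump_deriv])

lemma bumpd_cont: "continuous_on UNIV (bumpd c r)"
  unfolding bumpd_def by (intro continuous_intros)

lemma bump_cont: "continuous_on UNIV (bump c r)"
  unfolding bump_def by (intro continuous_intros)

lemma bump_zero:
  assumes "\<bar>t - c\<bar> \<ge> r" "r > 0"
  shows "bump c r t = 0" "bumpd c r t = 0"
proof -
  have "r\<^sup>2 \<le> (t - c)\<^sup>2" using assms by (metis abs_le_square_iff abs_of_pos)
  then show "bump c r t = 0" "bumpd c r t = 0" by (auto simp: bump_def bumpd_def max_def)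
qed

lemma bump_pos:
  assumes "\<bar>t - c\<bar> < r"
  shows "bump c r t > 0"
proof -
  have "\<bar>t - c\<bar> * \<bar>t - c\<bar> < r * r" using assms by (intro mult_strict_mono) auto
  then have "(t - c)\<^sup>2 < r\<^sup>2" by (simp add: power2_eq_square)
  then show ?thesis by (auto simp: bump_def max_def)
qed

lemma bump_nonneg: "bump c r t \<ge> 0"
  by (simp add: bump_def)

lemma shift_has_integral:
  fixes f :: "real \<Rightarrow> real"
  assumes "(f has_integral I) {a..t}"
  shows "((\<lambda>u. f (t - u)) has_integral I) {0..t-a}"
proof -
  have h1: "((\<lambda>x. f (-x)) has_integral I) {-t..-a}"
    using assms has_integral_reflect_real[of f] by blast
  have "((\<lambda>x. (\<lambda>x. f (-x)) (1 *\<^sub>R x + (-t))) has_integral I /\<^sub>R 1 ^ DIM(real))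
        (cbox ((-t - (-t)) /\<^sub>R 1) ((-a - (-t)) /\<^sub>R 1))"
    using h1 by (subst has_integral_affinity_iff) auto
  then show ?thesis by simp
qed

lemma powr0_prod_abs_int:
  fixes L p :: real and f :: "real \<Rightarrow> real"
  assumes "L \<ge> 0" "p > -1" "continuous_on {0..L} f"
  shows "(\<lambda>u. u powr p * f u) absolutely_integrable_on {0..L}"
proof -
  have k: "(\<lambda>u. u powr p) absolutely_integrable_on {0..L}"
    by (rule nonnegative_absolutely_integrable_1[OF integrable_on_powr_from_0]) (use assms in auto)
  have "(\<lambda>u. f u * u powr p) absolutely_integrable_on {0..L}"
  proof (rule absolutely_integrable_bounded_measurable_product_real)
    show "f \<in> borel_measurable (lebesgue_on {0..L})"
      by (rule continuous_imp_measurable_on_sets_lebesgue[OF assms(3)]) auto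
    show "bounded (f ` {0..L})"
      by (intro compact_imp_bounded compact_continuous_image assms(3)) auto
  qed (use k in auto)
  then show ?thesis by (simp add: mult.commute)
qed

lemma powr0_prod_integrable:
  fixes L p :: real and f :: "real \<Rightarrow> real"
  assumes "L \<ge> 0" "p > -1" "continuous_on {0..L} f"
  shows "(\<lambda>u. u powr p * f u) integrable_on {0..L}"
  using powr0_prod_abs_int[OF assms] absolutely_integrable_on_def by blast

lemma powr0_prod_bound:
  fixes L p B :: real and f :: "real \<Rightarrow> real"
  assumes "L \<ge> 0" "p > -1" "continuous_on {0..L} f" "\<And>u. u \<in> {0..L} \<Longrightarrow> \<bar>f u\<bar> \<le> B"
  shows "\<bar>integral {0..L} (\<lambda>u. u powr p * f u)\<bar> \<le> B * (L powr (p + 1) / (p + 1))"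
proof -
  have "norm (integral {0..L} (\<lambda>u. u powr p * f u)) \<le> integral {0..L} (\<lambda>u. B * u powr p)"
  proof (rule integral_norm_bound_integral)
    show "(\<lambda>u. u powr p * f u) integrable_on {0..L}" by (rule powr0_prod_integrable[OF assms(1-3)])
    show "(\<lambda>u. B * u powr p) integrable_on {0..L}"
      using integrable_on_powr_from_0[of p L] assms by (intro integrable_on_mult_right) auto
    fix x assume x: "x \<in> {0..L}"
    have "\<bar>x powr p * f x\<bar> = x powr p * \<bar>f x\<bar>" by (simp add: abs_mult)
    also have "\<dots> \<le> x powr p * B" by (intro mult_left_mono assms(4) x) auto
    finally show "norm (x powr p * f x) \<le> B * x powr p" by (simp add: mult.commute)
  qed
  also have "integral {0..L} (\<lambda>u. B * u powr p) = B * (L powr (p + 1) / (p + 1))"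
    using integral_unique[OF has_integral_powr_from_0[of p L]] assms by simp
  finally show ?thesis by simp
qed

lemma conv_repr:
  fixes h :: "real \<Rightarrow> real"
  assumes at: "a \<le> t" "t \<le> b" and p: "p > -1" and hc: "continuous_on UNIV h"
    and h0: "\<And>\<tau>. \<tau> \<le> a \<Longrightarrow> h \<tau> = 0"
  shows "integral {a..t} (\<lambda>\<tau>. (t - \<tau>) powr p * h \<tau>) = integral {0..b-a} (\<lambda>u. u powr p * h (t - u))"
proof -
  define I where "I = integral {a..t} (\<lambda>\<tau>. (t - \<tau>) powr p * h \<tau>)"
  have "((\<lambda>\<tau>. (t - \<tau>) powr p * h \<tau>) has_integral I) {a..t}"
    unfolding I_def by (intro integrable_integral kernel_prod_integrable at(1) p continuous_on_subset[OF hc] subset_UNIV)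
  from shift_has_integral[OF this]
  have "((\<lambda>u. u powr p * h (t - u)) has_integral I) (cbox 0 (t-a))"
    by simp
  from has_integral_restrict_closed_subinterval[OF this, of 0 "b - a"] at
  have r: "((\<lambda>u. if u \<in> cbox 0 (t - a) then u powr p * h (t - u) else 0) has_integral I) (cbox 0 (b - a))"
    by simp
  have eq: "(if u \<in> cbox 0 (t - a) then u powr p * h (t - u) else 0) = u powr p * h (t - u)"
    if u: "u \<in> cbox 0 (b - a)" for u
  proof (cases "u \<in> cbox 0 (t - a)")
    case False
    then have "t - u \<le> a" using u by auto
    then show ?thesis using False h0 by simp
  qed simp
  have "((\<lambda>u. u powr p * h (t - u)) has_integral I) (cbox 0 (b - a))"
    using has_integral_cong[of "cbox 0 (b - a)" "\<lambda>u. if u \<in> cbox 0 (t - a) then u powr p * h (t - u) else 0"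
        "\<lambda>u. u powr p * h (t - u)", OF eq] r by blast
  then show ?thesis unfolding I_def by (simp add: integral_unique)
qed

lemma conv_cont:
  fixes h :: "real \<Rightarrow> real"
  assumes ab: "a \<le> b" and p: "p > -1" and hc: "continuous_on UNIV h"
    and h0: "\<And>\<tau>. \<tau> \<le> a \<Longrightarrow> h \<tau> = 0"
  shows "continuous_on {a..b} (\<lambda>t. integral {a..t} (\<lambda>\<tau>. (t - \<tau>) powr p * h \<tau>))"
proof -
  define L where "L = b - a"
  have L: "L \<ge> 0" using ab by (simp add: L_def)
  define C where "C = L powr (p + 1) / (p + 1)"
  have C: "C \<ge> 0" using p by (simp add: C_def)
  define \<Phi> where "\<Phi> t = integral {0..L} (\<lambda>u. u powr p * h (t - u))" for t
  have ci: "continuous_on {0..L} (\<lambda>u. h (s - u))" for s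
    by (intro continuous_on_compose2[OF hc] continuous_intros) auto
  have ucont: "uniformly_continuous_on {a - L..b} h"
    by (intro compact_uniformly_continuous continuous_on_subset[OF hc]) auto
  have "continuous_on {a..b} \<Phi>"
    unfolding continuous_on_iff
  proof (intro ballI allI impI)
    fix t e :: real assume t: "t \<in> {a..b}" and e: "e > 0"
    have ep: "e / (C + 1) > 0" using e C by simp
    from ucont[unfolded uniformly_continuous_on_def, rule_format, OF ep]
    obtain d where d: "d > 0" and dd: "\<forall>x\<in>{a - L..b}. \<forall>x'\<in>{a - L..b}. dist x' x < d \<longrightarrow>
        dist (h x') (h x) < e / (C + 1)"
      by blast
    show "\<exists>d>0. \<forall>t'\<in>{a..b}. dist t' t < d \<longrightarrow> dist (\<Phi> t') (\<Phi> t) < e"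
    proof (intro exI[of _ d] conjI ballI impI d)
      fix t' assume t': "t' \<in> {a..b}" and dt: "dist t' t < d"
      have i1: "(\<lambda>u. u powr p * h (t' - u)) integrable_on {0..L}" by (rule powr0_prod_integrable[OF L p ci])
      have i2: "(\<lambda>u. u powr p * h (t - u)) integrable_on {0..L}" by (rule powr0_prod_integrable[OF L p ci])
      have "\<Phi> t' - \<Phi> t = integral {0..L} (\<lambda>u. u powr p * h (t' - u) - u powr p * h (t - u))"
        unfolding \<Phi>_def using integral_diff[OF i1 i2] by simp
      also have "\<dots> = integral {0..L} (\<lambda>u. u powr p * (h (t' - u) - h (t - u)))"
        by (simp add: right_diff_distrib)
      finally have eqd: "\<Phi> t' - \<Phi> t = integral {0..L} (\<lambda>u. u powr p * (h (t' - u) - h (t - u)))" .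
      have bnd: "\<bar>h (t' - u) - h (t - u)\<bar> \<le> e / (C + 1)" if u: "u \<in> {0..L}" for u
      proof -
        have m1: "t' - u \<in> {a - L..b}" "t - u \<in> {a - L..b}" using t t' u by (auto simp: L_def)
        have m2: "dist (t' - u) (t - u) < d" using dt by (simp add: dist_real_def)
        have "dist (h (t' - u)) (h (t - u)) < e / (C + 1)"
          using dd m1 m2 by blast
        then show ?thesis by (simp add: dist_real_def)
      qed
      have cc: "continuous_on {0..L} (\<lambda>u. h (t' - u) - h (t - u))" by (intro continuous_on_diff ci)
      have "\<bar>integral {0..L} (\<lambda>u. u powr p * (h (t' - u) - h (t - u)))\<bar> \<le> e / (C + 1) * C"
        using powr0_prod_bound[OF L p cc bnd] unfolding C_def by simp
      also have "\<dots> < e"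
      proof -
        have "e / (C + 1) * C = e * (C / (C + 1))" by simp
        also have "\<dots> < e * 1" using C e by (intro mult_strict_left_mono) auto
        finally show ?thesis by simp
      qed
      finally show "dist (\<Phi> t') (\<Phi> t) < e" using eqd by (simp add: dist_real_def)
    qed
  qed
  moreover have "\<And>t. t \<in> {a..b} \<Longrightarrow> integral {a..t} (\<lambda>\<tau>. (t - \<tau>) powr p * h \<tau>) = \<Phi> t"
    unfolding \<Phi>_def L_def by (rule conv_repr) (use p hc h0 in auto)
  ultimately show ?thesis using continuous_on_cong[OF refl, of "{a..b}" "\<lambda>t. integral {a..t} (\<lambda>\<tau>. (t - \<tau>) powr p * h \<tau>)" \<Phi>]
    by blast
qed

lemma meas_bl: "f \<in> borel_measurable borel \<Longrightarrow> f \<in> borel_measurable (lebesgue_on S)"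
  by (simp add: measurable_completion measurable_restrict_space1)

lemma ident_meas_lebesgue_on: "(\<lambda>x. x) \<in> borel_measurable (lebesgue_on S)"
  using id_borel_measurable_lebesgue_on by (simp add: id_def)

lemma bridge_set_integrable:
  fixes f :: "real \<Rightarrow> real"
  assumes "f \<in> borel_measurable borel" "f absolutely_integrable_on S" "S \<in> sets borel"
  shows "set_integrable lborel S f"
proof -
  have m: "(\<lambda>x. indicator S x *\<^sub>R f x) \<in> borel_measurable lborel"
    unfolding measurable_lborel2 using assms(1,3) by (intro borel_measurable_scaleR borel_measurable_indicator)
  have "integrable lebesgue (\<lambda>x. indicator S x *\<^sub>R f x)"
    using assms(2) unfolding set_integrable_def by simp
  then show ?thesis unfolding set_integrable_def using integrable_completion[OF m] by simp
qed

lemma kernel_left_has_integral: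
  fixes \<tau> b p :: real
  assumes "\<tau> \<le> b" "p > -1"
  shows "((\<lambda>t. (t - \<tau>) powr p) has_integral (b - \<tau>) powr (p + 1) / (p + 1)) {\<tau>..b}"
proof -
  have h0: "((\<lambda>x. x powr p) has_integral (b - \<tau>) powr (p + 1) / (p + 1)) {0..b-\<tau>}"
    using has_integral_powr_from_0[of p "b-\<tau>"] assms by simp
  have "((\<lambda>x. (\<lambda>x. x powr p) (1 *\<^sub>R x + (-\<tau>))) has_integral ((b - \<tau>) powr (p + 1) / (p + 1)) /\<^sub>R 1 ^ DIM(real))
        (cbox ((0 - (-\<tau>)) /\<^sub>R 1) ((b - \<tau> - (-\<tau>)) /\<^sub>R 1))"
    using h0 by (subst has_integral_affinity_iff) auto
  then show ?thesis by simp
qed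

lemma two_sing_bound:
  fixes \<tau> b t \<alpha> \<beta> :: real
  assumes "\<tau> < b" "\<tau> \<le> t" "t \<le> b" "\<alpha> > 0" "\<alpha> < 1" "\<beta> > 0"
  shows "(t - \<tau>) powr (-\<beta>) * (b - t) powr (\<alpha> - 1)
     \<le> ((b - \<tau>) / 2) powr (\<alpha> - 1) * (t - \<tau>) powr (-\<beta>) + ((b - \<tau>) / 2) powr (-\<beta>) * (b - t) powr (\<alpha> - 1)"
proof (cases "t \<le> (\<tau> + b) / 2")
  case True
  have "(b - t) powr (\<alpha> - 1) \<le> ((b - \<tau>) / 2) powr (\<alpha> - 1)"
    by (rule powr_mono2') (use assms True in auto)
  then have "(t - \<tau>) powr (-\<beta>) * (b - t) powr (\<alpha> - 1) \<le> (t - \<tau>) powr (-\<beta>) * ((b - \<tau>) / 2) powr (\<alpha> - 1)"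
    by (intro mult_left_mono) auto
  moreover have "0 \<le> ((b - \<tau>) / 2) powr (-\<beta>) * (b - t) powr (\<alpha> - 1)" by simp
  ultimately show ?thesis by (smt (verit) mult.commute)
next
  case False
  have "(t - \<tau>) powr (-\<beta>) \<le> ((b - \<tau>) / 2) powr (-\<beta>)"
    by (rule powr_mono2') (use assms False in auto)
  then have "(t - \<tau>) powr (-\<beta>) * (b - t) powr (\<alpha> - 1) \<le> ((b - \<tau>) / 2) powr (-\<beta>) * (b - t) powr (\<alpha> - 1)"
    by (intro mult_right_mono) auto
  moreover have "0 \<le> ((b - \<tau>) / 2) powr (\<alpha> - 1) * (t - \<tau>) powr (-\<beta>)" by simp
  ultimately show ?thesis by linarith
qed

lemma right_abs_int:
  fixes \<tau> b \<alpha> \<beta> :: real and \<phi> :: "real \<Rightarrow> real"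
  assumes tb: "\<tau> < b" and al: "\<alpha> > 0" "\<alpha> < 1" and be: "\<beta> > 0" "\<beta> < 1"
    and \<phi>: "continuous_on {\<tau>..b} \<phi>"
  shows "(\<lambda>t. (t - \<tau>) powr (-\<beta>) * ((b - t) powr (\<alpha> - 1) * \<phi> t)) absolutely_integrable_on {\<tau>..b}"
proof -
  have "bounded (\<phi> ` {\<tau>..b})" by (intro compact_imp_bounded compact_continuous_image \<phi>) auto
  then obtain M where M: "\<And>t. t \<in> {\<tau>..b} \<Longrightarrow> \<bar>\<phi> t\<bar> \<le> M"
    unfolding bounded_iff by (metis imageI real_norm_def)
  define c1 where "c1 = ((b - \<tau>) / 2) powr (\<alpha> - 1)"
  define c2 where "c2 = ((b - \<tau>) / 2) powr (-\<beta>)"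
  note ident_meas_lebesgue_on[measurable]
  have [measurable]: "\<phi> \<in> borel_measurable (lebesgue_on {\<tau>..b})"
    by (rule continuous_imp_measurable_on_sets_lebesgue[OF \<phi>]) auto
  show ?thesis
  proof (rule measurable_bounded_by_integrable_imp_absolutely_integrable)
    show "(\<lambda>t. (t - \<tau>) powr (-\<beta>) * ((b - t) powr (\<alpha> - 1) * \<phi> t)) \<in> borel_measurable (lebesgue_on {\<tau>..b})"
      by measurable
    show "{\<tau>..b} \<in> sets lebesgue" by simp
    have i1: "(\<lambda>t. (t - \<tau>) powr (-\<beta>)) integrable_on {\<tau>..b}"
      using kernel_left_has_integral[of \<tau> b "-\<beta>"] tb be by auto
    have i2: "(\<lambda>t. (b - t) powr (\<alpha> - 1)) integrable_on {\<tau>..b}"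
      using kernel_has_integral[of \<tau> b "\<alpha> - 1"] tb al by auto
    show "(\<lambda>t. M * (c1 * (t - \<tau>) powr (-\<beta>) + c2 * (b - t) powr (\<alpha> - 1))) integrable_on {\<tau>..b}"
      by (intro integrable_on_mult_right integrable_add i1 i2)
    fix t assume t: "t \<in> {\<tau>..b}"
    have "norm ((t - \<tau>) powr (-\<beta>) * ((b - t) powr (\<alpha> - 1) * \<phi> t)) = ((t - \<tau>) powr (-\<beta>) * (b - t) powr (\<alpha> - 1)) * \<bar>\<phi> t\<bar>"
      by (simp add: abs_mult)
    also have "\<dots> \<le> (c1 * (t - \<tau>) powr (-\<beta>) + c2 * (b - t) powr (\<alpha> - 1)) * M"
      using two_sing_bound[of \<tau> b t \<alpha> \<beta>] tb t al be M[OF t] unfolding c1_def c2_def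
      by (intro mult_mono) auto
    finally show "norm ((t - \<tau>) powr (-\<beta>) * ((b - t) powr (\<alpha> - 1) * \<phi> t)) \<le> M * (c1 * (t - \<tau>) powr (-\<beta>) + c2 * (b - t) powr (\<alpha> - 1))"
      by (simp add: mult.commute)
  qed
qed

lemma lint_restrict_eq:
  fixes A :: "real \<Rightarrow> real" and F :: "real \<Rightarrow> real"
  assumes "integrable lborel A" "\<And>t. A t = (if t \<in> S then F t else 0)"
  shows "integral\<^sup>L lborel A = integral S F"
proof -
  have "(A has_integral integral\<^sup>L lborel A) UNIV" by (rule has_integral_integral_real[OF assms(1)])
  moreover have "A = (\<lambda>t. if t \<in> S then F t else 0)" by (rule ext) (rule assms(2))
  ultimately have "((\<lambda>t. if t \<in> S then F t else 0) has_integral integral\<^sup>L lborel A) UNIV"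
    by simp
  then have "(F has_integral integral\<^sup>L lborel A) S" by (simp only: has_integral_restrict_UNIV)
  then show ?thesis by (simp add: integral_unique)
qed

lemma set_lint_eq_integral:
  fixes f :: "real \<Rightarrow> real"
  assumes "f \<in> borel_measurable borel" "f absolutely_integrable_on {c..d}"
  shows "integrable lborel (\<lambda>x. indicator {c..d} x * f x)"
    "integral\<^sup>L lborel (\<lambda>x. indicator {c..d} x * f x) = integral {c..d} f"
proof -
  have si: "set_integrable lborel {c..d} f" by (rule bridge_set_integrable[OF assms]) simp
  then show "integrable lborel (\<lambda>x. indicator {c..d} x * f x)" unfolding set_integrable_def by simp
  from set_borel_integral_eq_integral(2)[OF si]
  show "integral\<^sup>L lborel (\<lambda>x. indicator {c..d} x * f x) = integral {c..d} f"
    unfolding set_lebesgue_integral_def by simp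
qed

lemma fubini_frac:
  fixes a b \<alpha> \<beta> :: real and \<phi> h :: "real \<Rightarrow> real"
  assumes ab: "a < b" and al: "0 < \<alpha>" "\<alpha> < 1" and be: "0 < \<beta>" "\<beta> < 1"
    and \<phi>: "continuous_on {a..b} \<phi>" and h: "continuous_on UNIV h"
  shows "integral {a..b} (\<lambda>t. ((b - t) powr (\<alpha> - 1) * \<phi> t) * integral {a..t} (\<lambda>\<tau>. (t - \<tau>) powr (-\<beta>) * h \<tau>))
       = integral {a..b} (\<lambda>\<tau>. h \<tau> * integral {\<tau>..b} (\<lambda>t. (t - \<tau>) powr (-\<beta>) * ((b - t) powr (\<alpha> - 1) * \<phi> t)))"
proof -
  define \<phi>' where "\<phi>' t = indicator {a..b} t * \<phi> t" for t
  have m\<phi>'[measurable]: "\<phi>' \<in> borel_measurable borel"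
    using borel_measurable_continuous_on_indicator[OF _ \<phi>] unfolding \<phi>'_def by simp
  have mh[measurable]: "h \<in> borel_measurable borel" by (rule borel_measurable_continuous_onI[OF h])
  have \<phi>'_eq: "\<phi>' t = \<phi> t" if "t \<in> {a..b}" for t using that by (simp add: \<phi>'_def)
  have "bounded (\<phi> ` {a..b})" by (intro compact_imp_bounded compact_continuous_image \<phi>) auto
  then obtain M\<phi> where M\<phi>: "\<And>t. t \<in> {a..b} \<Longrightarrow> \<bar>\<phi> t\<bar> \<le> M\<phi>"
    unfolding bounded_iff by (metis imageI real_norm_def)
  have "bounded (h ` {a..b})" by (intro compact_imp_bounded compact_continuous_image continuous_on_subset[OF h]) auto
  then obtain Mh where Mh: "\<And>t. t \<in> {a..b} \<Longrightarrow> \<bar>h t\<bar> \<le> Mh"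
    unfolding bounded_iff by (metis imageI real_norm_def)
  have M\<phi>0: "M\<phi> \<ge> 0" using M\<phi>[of a] ab by auto
  have Mh0: "Mh \<ge> 0" using Mh[of a] ab by auto
  define P where "P t \<tau> = (if a \<le> \<tau> \<and> \<tau> \<le> t \<and> t \<le> b then (t - \<tau>) powr (-\<beta>) * ((b - t) powr (\<alpha> - 1) * (\<phi>' t * h \<tau>)) else 0)" for t \<tau>
  have mP[measurable]: "(\<lambda>(t, \<tau>). P t \<tau>) \<in> borel_measurable (lborel \<Otimes>\<^sub>M lborel)"
    unfolding P_def by measurable
  define K where "K = M\<phi> * Mh * ((b - a) powr (1 - \<beta>) / (1 - \<beta>))"

  have per_t: "integrable lborel (\<lambda>\<tau>. P t \<tau>) \<and>
      (LINT \<tau>|lborel. P t \<tau>) = (if t \<in> {a..b} then ((b - t) powr (\<alpha> - 1) * \<phi> t) * integral {a..t} (\<lambda>\<tau>. (t - \<tau>) powr (-\<beta>) * h \<tau>) else 0) \<and>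
      (LINT \<tau>|lborel. norm (P t \<tau>)) \<le> K * (indicator {a..b} t * (b - t) powr (\<alpha> - 1))" for t
  proof (cases "t \<in> {a..b}")
    case False
    then have "P t \<tau> = 0" for \<tau> by (auto simp: P_def)
    then show ?thesis using False by auto
  next
    case True
    define c where "c = (b - t) powr (\<alpha> - 1) * \<phi> t"
    define f where "f \<tau> = (t - \<tau>) powr (-\<beta>) * (c * h \<tau>)" for \<tau>
    have Pf: "P t \<tau> = indicator {a..t} \<tau> * f \<tau>" for \<tau>
      using True by (auto simp: P_def f_def c_def \<phi>'_eq mult_ac)
    have mf: "f \<in> borel_measurable borel" unfolding f_def by measurable
    have af: "f absolutely_integrable_on {a..t}"
      unfolding f_def by (rule kernel_prod_abs_int) (use True be in \<open>auto intro!: continuous_intros continuous_on_subset[OF h]\<close>)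
    note S = set_lint_eq_integral[OF mf af]
    have i1: "integrable lborel (\<lambda>\<tau>. P t \<tau>)" using S(1) by (simp add: Pf)
    have "(LINT \<tau>|lborel. P t \<tau>) = integral {a..t} f" using S(2) by (simp add: Pf)
    also have "\<dots> = c * integral {a..t} (\<lambda>\<tau>. (t - \<tau>) powr (-\<beta>) * h \<tau>)"
      unfolding f_def by (simp add: mult.left_commute)
    finally have i2: "(LINT \<tau>|lborel. P t \<tau>) = c * integral {a..t} (\<lambda>\<tau>. (t - \<tau>) powr (-\<beta>) * h \<tau>)" .
    define D where "D \<tau> = (t - \<tau>) powr (-\<beta>) * (Mh * \<bar>c\<bar>)" for \<tau>
    have mD: "D \<in> borel_measurable borel" unfolding D_def by measurable
    have aD: "D absolutely_integrable_on {a..t}"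
      unfolding D_def by (rule kernel_prod_abs_int) (use True be in auto)
    note SD = set_lint_eq_integral[OF mD aD]
    have "(LINT \<tau>|lborel. norm (P t \<tau>)) \<le> (LINT \<tau>|lborel. indicator {a..t} \<tau> * D \<tau>)"
    proof (rule integral_mono)
      show "integrable lborel (\<lambda>\<tau>. norm (P t \<tau>))" using i1 by simp
      show "integrable lborel (\<lambda>\<tau>. indicator {a..t} \<tau> * D \<tau>)" by (rule SD(1))
      fix \<tau> :: real
      show "norm (P t \<tau>) \<le> indicator {a..t} \<tau> * D \<tau>"
      proof (cases "\<tau> \<in> {a..t}")
        case True2: True
        have "norm (P t \<tau>) = (t - \<tau>) powr (-\<beta>) * (\<bar>c\<bar> * \<bar>h \<tau>\<bar>)"
          using True2 by (simp add: Pf f_def abs_mult)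
        also have "\<dots> \<le> (t - \<tau>) powr (-\<beta>) * (\<bar>c\<bar> * Mh)"
          using Mh[of \<tau>] True True2 by (intro mult_left_mono) auto
        finally show ?thesis using True2 by (simp add: D_def mult_ac)
      qed (simp add: Pf)
    qed
    also have "\<dots> = integral {a..t} D" by (rule SD(2))
    also have "\<dots> = Mh * \<bar>c\<bar> * ((t - a) powr (1 - \<beta>) / (1 - \<beta>))"
      using integral_unique[OF kernel_has_integral[of a t "-\<beta>"]] True be
      unfolding D_def by (simp add: mult.commute)
    also have "\<dots> \<le> Mh * (M\<phi> * (b - t) powr (\<alpha> - 1)) * ((b - a) powr (1 - \<beta>) / (1 - \<beta>))"
    proof (intro mult_mono mult_left_mono divide_right_mono powr_mono2)
      show "\<bar>c\<bar> \<le> M\<phi> * (b - t) powr (\<alpha> - 1)"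
        unfolding c_def using mult_left_mono[OF M\<phi>[OF True], of "(b - t) powr (\<alpha> - 1)"]
        by (simp add: abs_mult mult.commute)
    qed (use True be Mh0 M\<phi>0 in auto)
    also have "\<dots> = K * (indicator {a..b} t * (b - t) powr (\<alpha> - 1))"
      using True by (simp add: K_def mult_ac)
    finally show ?thesis using i1 i2 True by (simp add: c_def)
  qed

  have per_tau: "(LINT t|lborel. P t \<tau>) = (if \<tau> \<in> {a..b} then h \<tau> * integral {\<tau>..b} (\<lambda>t. (t - \<tau>) powr (-\<beta>) * ((b - t) powr (\<alpha> - 1) * \<phi> t)) else 0)" for \<tau>
  proof (cases "\<tau> \<in> {a..<b}")
    case False
    then have "P t \<tau> = 0" for t by (auto simp: P_def)
    moreover have "\<tau> \<in> {a..b} \<Longrightarrow> \<tau> = b" using False by auto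
    ultimately show ?thesis by auto
  next
    case True
    define f where "f t = (t - \<tau>) powr (-\<beta>) * ((b - t) powr (\<alpha> - 1) * (\<phi>' t * h \<tau>))" for t
    have Pf: "P t \<tau> = indicator {\<tau>..b} t * f t" for t
      using True by (auto simp: P_def f_def)
    have mf: "f \<in> borel_measurable borel" unfolding f_def by measurable
    have cf: "continuous_on {\<tau>..b} (\<lambda>t. \<phi>' t * h \<tau>)"
    proof -
      have "continuous_on {\<tau>..b} (\<lambda>t. \<phi> t * h \<tau>)"
        using True by (intro continuous_intros continuous_on_subset[OF \<phi>]) auto
      then show ?thesis by (rule continuous_on_eq) (use True in \<open>auto simp: \<phi>'_eq\<close>)
    qed
    have af: "f absolutely_integrable_on {\<tau>..b}"
      unfolding f_def by (rule right_abs_int[OF _ al be cf]) (use True in auto)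
    note S = set_lint_eq_integral[OF mf af]
    have "(LINT t|lborel. P t \<tau>) = integral {\<tau>..b} f" using S(2) by (simp add: Pf)
    also have "\<dots> = integral {\<tau>..b} (\<lambda>t. h \<tau> * ((t - \<tau>) powr (-\<beta>) * ((b - t) powr (\<alpha> - 1) * \<phi> t)))"
      by (rule integral_cong) (use True in \<open>auto simp: f_def \<phi>'_eq mult_ac\<close>)
    also have "\<dots> = h \<tau> * integral {\<tau>..b} (\<lambda>t. (t - \<tau>) powr (-\<beta>) * ((b - t) powr (\<alpha> - 1) * \<phi> t))"
      by simp
    finally show ?thesis using True by simp
  qed

  have wint: "integrable lborel (\<lambda>t. indicator {a..b} t * (b - t) powr (\<alpha> - 1))"
  proof -
    have "(\<lambda>t. (b - t) powr (\<alpha> - 1)) \<in> borel_measurable borel" by measurable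
    moreover have "(\<lambda>t. (b - t) powr (\<alpha> - 1)) absolutely_integrable_on {a..b}"
      using kernel_abs_int[of a b "\<alpha> - 1"] ab al by simp
    ultimately show ?thesis by (rule set_lint_eq_integral(1))
  qed
  have intP: "integrable (lborel \<Otimes>\<^sub>M lborel) (\<lambda>(t, \<tau>). P t \<tau>)"
  proof (rule lborel_pair.Fubini_integrable)
    show "(\<lambda>(t, \<tau>). P t \<tau>) \<in> borel_measurable (lborel \<Otimes>\<^sub>M lborel)" by (rule mP)
    show "integrable lborel (\<lambda>t. LINT \<tau>|lborel. norm ((\<lambda>(t, \<tau>). P t \<tau>) (t, \<tau>)))"
    proof (rule Bochner_Integration.integrable_bound)
      show "integrable lborel (\<lambda>t. K * (indicator {a..b} t * (b - t) powr (\<alpha> - 1)))"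
        using wint by simp
      show "(\<lambda>t. LINT \<tau>|lborel. norm ((\<lambda>(t, \<tau>). P t \<tau>) (t, \<tau>))) \<in> borel_measurable lborel"
        by measurable
      show "AE t in lborel. norm (LINT \<tau>|lborel. norm ((\<lambda>(t, \<tau>). P t \<tau>) (t, \<tau>)))
          \<le> norm (K * (indicator {a..b} t * (b - t) powr (\<alpha> - 1)))"
      proof (intro AE_I2)
        fix t :: real
        have "0 \<le> (LINT \<tau>|lborel. norm (P t \<tau>))" by simp
        then show "norm (LINT \<tau>|lborel. norm ((\<lambda>(t, \<tau>). P t \<tau>) (t, \<tau>)))
          \<le> norm (K * (indicator {a..b} t * (b - t) powr (\<alpha> - 1)))"
        proof -
          have "(LINT \<tau>|lborel. norm (P t \<tau>)) \<le> K * (indicator {a..b} t * (b - t) powr (\<alpha> - 1))"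
            using per_t[of t] by blast
          then show ?thesis using \<open>0 \<le> (LINT \<tau>|lborel. norm (P t \<tau>))\<close> by simp
        qed
      qed
    qed
    show "AE t in lborel. integrable lborel (\<lambda>\<tau>. (\<lambda>(t, \<tau>). P t \<tau>) (t, \<tau>))"
      using per_t by simp
  qed
  have intP': "integrable (lborel \<Otimes>\<^sub>M lborel) (case_prod P)" using intP by simp
  have fub: "(LINT \<tau>|lborel. LINT t|lborel. P t \<tau>) = (LINT t|lborel. LINT \<tau>|lborel. P t \<tau>)"
    by (rule lborel_pair.Fubini_integral[OF intP'])
  have lhs: "(LINT t|lborel. LINT \<tau>|lborel. P t \<tau>) =
      integral {a..b} (\<lambda>t. ((b - t) powr (\<alpha> - 1) * \<phi> t) * integral {a..t} (\<lambda>\<tau>. (t - \<tau>) powr (-\<beta>) * h \<tau>))"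
    by (rule lint_restrict_eq) (use lborel_pair.integrable_fst[OF intP'] per_t in auto)
  have rhs: "(LINT \<tau>|lborel. LINT t|lborel. P t \<tau>) =
      integral {a..b} (\<lambda>\<tau>. h \<tau> * integral {\<tau>..b} (\<lambda>t. (t - \<tau>) powr (-\<beta>) * ((b - t) powr (\<alpha> - 1) * \<phi> t)))"
    by (rule lint_restrict_eq) (use lborel_pair.integrable_snd[OF intP'] per_tau in auto)
  show ?thesis using fub lhs rhs by simp
qed

lemma has_integral_support:
  fixes f :: "real \<Rightarrow> real"
  assumes "{p..q} \<subseteq> {a..b}" "\<And>x. x \<in> {a..b} \<Longrightarrow> x \<notin> {p..q} \<Longrightarrow> f x = 0" "(f has_integral I) {p..q}"
  shows "(f has_integral I) {a..b}"
proof -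
  have "((\<lambda>x. if x \<in> cbox p q then f x else 0) has_integral I) (cbox a b)"
    using has_integral_restrict_closed_subinterval[of f I p q a b] assms(1,3) by simp
  moreover have "\<And>x. x \<in> cbox a b \<Longrightarrow> (if x \<in> cbox p q then f x else 0) = f x"
    using assms(2) by auto
  ultimately show ?thesis
    using has_integral_cong[of "cbox a b" "\<lambda>x. if x \<in> cbox p q then f x else 0" f] by simp
qed

lemma deriv_bump_fun: "deriv (bump c r) = bumpd c r"
  by (rule ext) (rule deriv_bump)

lemma lCD_bump:
  "lCD \<beta> a (bump c r) t = (1 / Gamma (1 - \<beta>)) * integral {a..t} (\<lambda>\<tau>. (t - \<tau>) powr (-\<beta>) * bumpd c r \<tau>)"
  unfolding lCD_def lRLI_def deriv_bump_fun by simp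

lemma ibp_frac:
  fixes a b \<alpha> \<beta> c r :: real and \<phi> g :: "real \<Rightarrow> real"
  assumes ab: "a < b" and al: "0 < \<alpha>" "\<alpha> < 1" and be: "0 < \<beta>" "\<beta> < 1"
    and \<phi>: "continuous_on {a..b} \<phi>" and g: "\<And>t. t \<in> {a..b} \<Longrightarrow> g t = (b - t) powr (\<alpha> - 1) * \<phi> t"
    and cr: "r > 0" "a < c - r" "c + r < b"
    and dR: "\<forall>t\<in>{a<..<b}. (\<lambda>s. rRLI (1 - \<beta>) b g s) differentiable (at t)"
    and cD: "continuous_on {a<..<b} (rRLD \<beta> b g)"
  shows "integral {a..b} (\<lambda>t. g t * lCD \<beta> a (bump c r) t) = integral {a..b} (\<lambda>t. bump c r t * rRLD \<beta> b g t)"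
proof -
  define \<Gamma> where "\<Gamma> = Gamma (1 - \<beta>)"
  define h where "h = bumpd c r"
  define \<eta> where "\<eta> = bump c r"
  define R where "R = rRLI (1 - \<beta>) b g"
  have hc: "continuous_on UNIV h" unfolding h_def by (rule bumpd_cont)
  have "integral {a..b} (\<lambda>t. g t * lCD \<beta> a (bump c r) t)
      = integral {a..b} (\<lambda>t. (1 / \<Gamma>) * (((b - t) powr (\<alpha> - 1) * \<phi> t) * integral {a..t} (\<lambda>\<tau>. (t - \<tau>) powr (-\<beta>) * h \<tau>)))"
    by (rule integral_cong) (simp add: g lCD_bump \<Gamma>_def h_def)
  also have "\<dots> = (1 / \<Gamma>) * integral {a..b} (\<lambda>t. ((b - t) powr (\<alpha> - 1) * \<phi> t) * integral {a..t} (\<lambda>\<tau>. (t - \<tau>) powr (-\<beta>) * h \<tau>))"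
    by simp
  also have "\<dots> = (1 / \<Gamma>) * integral {a..b} (\<lambda>\<tau>. h \<tau> * integral {\<tau>..b} (\<lambda>t. (t - \<tau>) powr (-\<beta>) * ((b - t) powr (\<alpha> - 1) * \<phi> t)))"
    by (simp add: fubini_frac[OF ab al be \<phi> hc])
  also have "\<dots> = integral {a..b} (\<lambda>\<tau>. h \<tau> * R \<tau>)"
  proof -
    have "R \<tau> = (1 / \<Gamma>) * integral {\<tau>..b} (\<lambda>t. (t - \<tau>) powr (-\<beta>) * ((b - t) powr (\<alpha> - 1) * \<phi> t))"
      if "\<tau> \<in> {a..b}" for \<tau>
    proof -
      have "R \<tau> = (1 / \<Gamma>) * integral {\<tau>..b} (\<lambda>t. (t - \<tau>) powr (-\<beta>) * g t)"
        unfolding R_def rRLI_def \<Gamma>_def by simp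
      also have "integral {\<tau>..b} (\<lambda>t. (t - \<tau>) powr (-\<beta>) * g t) = integral {\<tau>..b} (\<lambda>t. (t - \<tau>) powr (-\<beta>) * ((b - t) powr (\<alpha> - 1) * \<phi> t))"
        by (rule integral_cong) (use that in \<open>simp add: g\<close>)
      finally show ?thesis .
    qed
    then have "integral {a..b} (\<lambda>\<tau>. h \<tau> * R \<tau>) = integral {a..b} (\<lambda>\<tau>. (1 / \<Gamma>) * (h \<tau> * integral {\<tau>..b} (\<lambda>t. (t - \<tau>) powr (-\<beta>) * ((b - t) powr (\<alpha> - 1) * \<phi> t))))"
      by (intro integral_cong) (simp add: mult_ac)
    then show ?thesis by simp
  qed
  also have "\<dots> = integral {a..b} (\<lambda>t. \<eta> t * rRLD \<beta> b g t)"
  proof -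
    define p where "p = c - r"
    define q where "q = c + r"
    have pq: "p < q" "{p..q} \<subseteq> {a<..<b}" "{p..q} \<subseteq> {a..b}" using cr by (auto simp: p_def q_def)
    have out: "h x = 0 \<and> \<eta> x = 0" if "x \<notin> {p<..<q}" for x
    proof -
      have "\<bar>x - c\<bar> \<ge> r" using that by (auto simp: p_def q_def)
      then show ?thesis unfolding h_def \<eta>_def using bump_zero[of r x c] cr by simp
    qed
    have dRt: "(R has_real_derivative deriv R t) (at t)" if "t \<in> {p..q}" for t
      using dR pq that unfolding R_def by (subst DERIV_deriv_iff_real_differentiable) blast
    have rD: "rRLD \<beta> b g t = - deriv R t" for t unfolding rRLD_def R_def by simp
    have cont1: "continuous_on {p..q} (\<lambda>t. \<eta> t * rRLD \<beta> b g t)"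
      by (intro continuous_intros continuous_on_subset[OF bump_cont[of c r, folded \<eta>_def]]
          continuous_on_subset[OF cD] pq) auto
    have "((\<lambda>t. h t * R t + \<eta> t * deriv R t) has_integral (\<eta> q * R q - \<eta> p * R p)) {p..q}"
    proof (rule fundamental_theorem_of_calculus)
      show "p \<le> q" using pq by simp
      fix t assume t: "t \<in> {p..q}"
      have "((\<lambda>t. \<eta> t * R t) has_real_derivative (h t * R t + \<eta> t * deriv R t)) (at t)"
        using DERIV_mult[OF bump_deriv[of c r t] dRt[OF t]] unfolding h_def \<eta>_def by (simp add: mult.commute)
      then show "((\<lambda>t. \<eta> t * R t) has_vector_derivative (h t * R t + \<eta> t * deriv R t)) (at t within {p..q})"
        by (simp add: has_real_derivative_iff_has_vector_derivative[symmetric] has_field_derivative_at_within)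
    qed
    moreover have "\<eta> q = 0" "\<eta> p = 0" using out[of q] out[of p] by auto
    ultimately have i1: "((\<lambda>t. h t * R t + \<eta> t * deriv R t) has_integral 0) {p..q}" by simp
    have i2: "((\<lambda>t. \<eta> t * rRLD \<beta> b g t) has_integral integral {p..q} (\<lambda>t. \<eta> t * rRLD \<beta> b g t)) {p..q}"
      by (intro integrable_integral integrable_continuous_interval cont1)
    have "((\<lambda>t. (h t * R t + \<eta> t * deriv R t) + \<eta> t * rRLD \<beta> b g t) has_integral
          0 + integral {p..q} (\<lambda>t. \<eta> t * rRLD \<beta> b g t)) {p..q}"
      by (rule has_integral_add[OF i1 i2])
    then have j1: "((\<lambda>t. h t * R t) has_integral integral {p..q} (\<lambda>t. \<eta> t * rRLD \<beta> b g t)) {p..q}"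
      by (simp add: rD)
    have A: "((\<lambda>t. h t * R t) has_integral integral {p..q} (\<lambda>t. \<eta> t * rRLD \<beta> b g t)) {a..b}"
      by (rule has_integral_support[OF pq(3) _ j1]) (use out in auto)
    have B: "((\<lambda>t. \<eta> t * rRLD \<beta> b g t) has_integral integral {p..q} (\<lambda>t. \<eta> t * rRLD \<beta> b g t)) {a..b}"
      by (rule has_integral_support[OF pq(3) _ i2]) (use out in auto)
    show ?thesis using A B by (simp add: integral_unique)
  qed
  finally show ?thesis unfolding \<eta>_def .
qed

lemma lagrange2:
  fixes \<phi> \<psi> :: "real \<Rightarrow> real \<Rightarrow> real" and \<phi>0 \<xi> j1 j2 p1 p2 :: real
  assumes Jexp: "\<And>\<epsilon>. \<epsilon> > 0 \<Longrightarrow> \<exists>\<delta>>0. \<forall>e1 e2. \<bar>e1\<bar> + \<bar>e2\<bar> < \<delta> \<longrightarrow> \<bar>\<phi> e1 e2 - \<phi>0 - j1 * e1 - j2 * e2\<bar> \<le> \<epsilon> * (\<bar>e1\<bar> + \<bar>e2\<bar>)"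
    and Iexp: "\<And>\<epsilon>. \<epsilon> > 0 \<Longrightarrow> \<exists>\<delta>>0. \<forall>e1 e2. \<bar>e1\<bar> + \<bar>e2\<bar> < \<delta> \<longrightarrow> \<bar>\<psi> e1 e2 - \<xi> - p1 * e1 - p2 * e2\<bar> \<le> \<epsilon> * (\<bar>e1\<bar> + \<bar>e2\<bar>)"
    and cont: "\<And>e1. continuous_on UNIV (\<psi> e1)"
    and minim: "\<And>e1 e2. \<psi> e1 e2 = \<xi> \<Longrightarrow> \<phi>0 \<le> \<phi> e1 e2"
    and p2: "p2 \<noteq> 0"
  shows "j1 * p2 = j2 * p1"
proof (rule ccontr)
  assume ne: "j1 * p2 \<noteq> j2 * p1"
  define A where "A = j1 - j2 * p1 / p2"
  have A: "A \<noteq> 0" using ne p2 by (auto simp: A_def field_simps)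
  define K where "K = 2 * (\<bar>p1\<bar> + 1) / \<bar>p2\<bar>"
  have K: "K > 0" using p2 by (simp add: K_def)
  have Kp2: "\<bar>p2\<bar> * K = 2 * (\<bar>p1\<bar> + 1)" using p2 by (simp add: K_def)
  define Q where "Q = \<bar>j2\<bar> / \<bar>p2\<bar> + 1"
  have Q: "Q \<ge> 1" by (simp add: Q_def)
  define \<epsilon> where "\<epsilon> = min (1 / (1 + K)) (\<bar>A\<bar> / (2 * (1 + K) * Q))"
  have \<epsilon>: "\<epsilon> > 0" using K Q A by (simp add: \<epsilon>_def)
  have \<epsilon>1: "\<epsilon> * (1 + K) \<le> 1"
  proof -
    have "\<epsilon> \<le> 1 / (1 + K)" by (simp add: \<epsilon>_def)
    then have "\<epsilon> * (1 + K) \<le> 1 / (1 + K) * (1 + K)" using K by (intro mult_right_mono) auto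
    then show ?thesis using K by simp
  qed
  have \<epsilon>2: "\<epsilon> * (1 + K) * Q \<le> \<bar>A\<bar> / 2"
  proof -
    have "\<epsilon> \<le> \<bar>A\<bar> / (2 * (1 + K) * Q)" by (simp add: \<epsilon>_def)
    then have "\<epsilon> * ((1 + K) * Q) \<le> \<bar>A\<bar> / (2 * (1 + K) * Q) * ((1 + K) * Q)"
      using K Q by (intro mult_right_mono) auto
    also have "\<dots> = \<bar>A\<bar> / 2"
    proof -
      have D: "(1 + K) * Q > 0" using K Q by simp
      have "\<bar>A\<bar> / (2 * (1 + K) * Q) * ((1 + K) * Q) = (\<bar>A\<bar> * ((1 + K) * Q)) / (2 * ((1 + K) * Q))"
        by (simp only: times_divide_eq_left mult.assoc)
      also have "\<dots> = \<bar>A\<bar> / 2" using D by (subst mult_divide_mult_cancel_right) auto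
      finally show ?thesis .
    qed
    finally show ?thesis by (simp add: mult.assoc)
  qed
  obtain \<delta>J where \<delta>J: "\<delta>J > 0" "\<And>e1 e2. \<bar>e1\<bar> + \<bar>e2\<bar> < \<delta>J \<Longrightarrow> \<bar>\<phi> e1 e2 - \<phi>0 - j1 * e1 - j2 * e2\<bar> \<le> \<epsilon> * (\<bar>e1\<bar> + \<bar>e2\<bar>)"
    using Jexp[OF \<epsilon>] by blast
  obtain \<delta>I where \<delta>I: "\<delta>I > 0" "\<And>e1 e2. \<bar>e1\<bar> + \<bar>e2\<bar> < \<delta>I \<Longrightarrow> \<bar>\<psi> e1 e2 - \<xi> - p1 * e1 - p2 * e2\<bar> \<le> \<epsilon> * (\<bar>e1\<bar> + \<bar>e2\<bar>)"
    using Iexp[OF \<epsilon>] by blast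
  define t where "t = min \<delta>J \<delta>I / (2 * (1 + K))"
  have t: "t > 0" using \<delta>J \<delta>I K by (simp add: t_def)
  have "(1 + K) * t = (min \<delta>J \<delta>I * (1 + K)) / (2 * (1 + K))"
    by (simp add: t_def)
  also have "\<dots> = min \<delta>J \<delta>I / 2" using K by (subst mult_divide_mult_cancel_right) auto
  finally have t1: "(1 + K) * t = min \<delta>J \<delta>I / 2" .
  have t2: "(1 + K) * t < \<delta>J" "(1 + K) * t < \<delta>I"
    using \<delta>J(1) \<delta>I(1) unfolding t1 by linarith+
  define s where "s = (if A > 0 then - t else t)"
  have s: "\<bar>s\<bar> = t" "A * s = - \<bar>A\<bar> * t" using t A by (auto simp: s_def)
  have p1s: "\<bar>p1 * s\<bar> = \<bar>p1\<bar> * t" using s by (simp add: abs_mult)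
  have small: "\<bar>s\<bar> + \<bar>e2\<bar> \<le> (1 + K) * t" if "\<bar>e2\<bar> \<le> K * t" for e2
    using that s by (simp add: algebra_simps)
  have remI: "\<bar>\<psi> s e2 - \<xi> - p1 * s - p2 * e2\<bar> \<le> t" if "\<bar>e2\<bar> \<le> K * t" for e2
  proof -
    have "\<bar>s\<bar> + \<bar>e2\<bar> < \<delta>I" using small[OF that] t2 by linarith
    then have "\<bar>\<psi> s e2 - \<xi> - p1 * s - p2 * e2\<bar> \<le> \<epsilon> * (\<bar>s\<bar> + \<bar>e2\<bar>)" by (rule \<delta>I(2))
    also have "\<dots> \<le> \<epsilon> * ((1 + K) * t)" using small[OF that] \<epsilon> by (intro mult_left_mono) auto
    also have "\<dots> \<le> t" using \<epsilon>1 t by (simp add: mult.assoc[symmetric] mult_le_cancel_right1)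
    finally show ?thesis .
  qed
  have Kt: "\<bar>K * t\<bar> \<le> K * t" "\<bar>- (K * t)\<bar> \<le> K * t" using K t by auto
  have pos: "\<psi> s (K * t) > \<xi> \<and> \<psi> s (- (K * t)) < \<xi>" if "p2 > 0"
  proof -
    have "p2 * (K * t) = (\<bar>p2\<bar> * K) * t" using that by (simp add: mult_ac)
    also have "\<dots> = 2 * (\<bar>p1\<bar> * t) + 2 * t" unfolding Kp2 by (simp add: algebra_simps)
    finally have e: "p2 * (K * t) = 2 * (\<bar>p1\<bar> * t) + 2 * t" .
    have r1: "\<bar>\<psi> s (K * t) - \<xi> - p1 * s - p2 * (K * t)\<bar> \<le> t" by (rule remI[OF Kt(1)])
    have r2: "\<bar>\<psi> s (- (K * t)) - \<xi> - p1 * s - p2 * (- (K * t))\<bar> \<le> t" by (rule remI[OF Kt(2)])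
    show ?thesis using e r1 r2 p1s t by (auto simp: abs_le_iff)
  qed
  have neg: "\<psi> s (K * t) < \<xi> \<and> \<psi> s (- (K * t)) > \<xi>" if "p2 < 0"
  proof -
    have "p2 * (K * t) = - ((\<bar>p2\<bar> * K) * t)" using that by (simp add: mult_ac)
    also have "\<dots> = - (2 * (\<bar>p1\<bar> * t) + 2 * t)" unfolding Kp2 by (simp add: algebra_simps)
    finally have e: "p2 * (K * t) = - (2 * (\<bar>p1\<bar> * t) + 2 * t)" .
    have r1: "\<bar>\<psi> s (K * t) - \<xi> - p1 * s - p2 * (K * t)\<bar> \<le> t" by (rule remI[OF Kt(1)])
    have r2: "\<bar>\<psi> s (- (K * t)) - \<xi> - p1 * s - p2 * (- (K * t))\<bar> \<le> t" by (rule remI[OF Kt(2)])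
    show ?thesis using e r1 r2 p1s t by (auto simp: abs_le_iff)
  qed
  have "\<exists>e2. - (K * t) \<le> e2 \<and> e2 \<le> K * t \<and> \<psi> s e2 = \<xi>"
  proof (cases "p2 > 0")
    case True
    show ?thesis using pos[OF True] K t
      by (intro IVT'[of "\<psi> s"] continuous_on_subset[OF cont]) auto
  next
    case False
    then have "p2 < 0" using p2 by simp
    show ?thesis using neg[OF \<open>p2 < 0\<close>] K t
      by (intro IVT2'[of "\<psi> s"] continuous_on_subset[OF cont]) auto
  qed
  then obtain e2 where e20: "- (K * t) \<le> e2" "e2 \<le> K * t" "\<psi> s e2 = \<xi>" by blast
  have e2: "\<bar>e2\<bar> \<le> K * t" "\<psi> s e2 = \<xi>" using e20 by (auto simp: abs_le_iff)
  have sm: "\<bar>s\<bar> + \<bar>e2\<bar> \<le> (1 + K) * t" by (rule small[OF e2(1)])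
  define R1 where "R1 = \<phi> s e2 - \<phi>0 - j1 * s - j2 * e2"
  define R2 where "R2 = \<psi> s e2 - \<xi> - p1 * s - p2 * e2"
  have bR: "\<bar>R\<bar> \<le> \<epsilon> * ((1 + K) * t)" if "\<bar>R\<bar> \<le> \<epsilon> * (\<bar>s\<bar> + \<bar>e2\<bar>)" for R
  proof -
    have "\<epsilon> * (\<bar>s\<bar> + \<bar>e2\<bar>) \<le> \<epsilon> * ((1 + K) * t)" using sm \<epsilon> by (intro mult_left_mono) auto
    then show ?thesis using that by linarith
  qed
  have smJ: "\<bar>s\<bar> + \<bar>e2\<bar> < \<delta>J" and smI: "\<bar>s\<bar> + \<bar>e2\<bar> < \<delta>I" using sm t2 by linarith+
  have R1: "\<bar>R1\<bar> \<le> \<epsilon> * ((1 + K) * t)" unfolding R1_def by (rule bR[OF \<delta>J(2)[OF smJ]])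
  have R2: "\<bar>R2\<bar> \<le> \<epsilon> * ((1 + K) * t)" unfolding R2_def by (rule bR[OF \<delta>I(2)[OF smI]])
  have e2eq: "e2 = - (p1 * s + R2) / p2" using e2(2) p2 unfolding R2_def by (simp add: field_simps)
  have "\<phi> s e2 - \<phi>0 = A * s + (R1 - j2 / p2 * R2)"
    unfolding R1_def A_def using p2 by (subst e2eq) (simp add: field_simps)
  also have "\<dots> \<le> - \<bar>A\<bar> * t + (\<bar>R1\<bar> + \<bar>j2 / p2\<bar> * \<bar>R2\<bar>)"
  proof -
    have "- (j2 / p2 * R2) \<le> \<bar>j2 / p2\<bar> * \<bar>R2\<bar>" by (metis abs_ge_minus_self abs_mult)
    moreover have "R1 \<le> \<bar>R1\<bar>" by simp
    ultimately show ?thesis using s(2) by (smt (verit))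
  qed
  also have "\<dots> \<le> - \<bar>A\<bar> * t + (\<epsilon> * ((1 + K) * t) + \<bar>j2 / p2\<bar> * (\<epsilon> * ((1 + K) * t)))"
    using R1 R2 by (intro add_left_mono add_mono mult_left_mono) auto
  also have "\<dots> = - \<bar>A\<bar> * t + \<epsilon> * (1 + K) * Q * t"
    unfolding Q_def by (simp add: algebra_simps abs_divide add_divide_distrib)
  also have "\<dots> \<le> - \<bar>A\<bar> * t + \<bar>A\<bar> / 2 * t"
    using \<epsilon>2 t by (intro add_left_mono mult_right_mono) auto
  also have "\<dots> < 0"
  proof -
    have "\<bar>A\<bar> * t > 0" using A t by simp
    moreover have "\<bar>A\<bar> / 2 * t = (\<bar>A\<bar> * t) / 2" by simp
    ultimately show ?thesis by linarith
  qed
  finally have "\<phi> s e2 < \<phi>0" by simp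
  with minim[OF e2(2)] show False by simp
qed

lemma wint:
  fixes f :: "real \<Rightarrow> real"
  assumes "a \<le> b" "\<alpha> > 0" "continuous_on {a..b} f"
  shows "(\<lambda>t. (b - t) powr (\<alpha> - 1) * f t) integrable_on {a..b}"
  by (rule kernel_prod_integrable) (use assms in auto)

lemma wbound:
  fixes f :: "real \<Rightarrow> real"
  assumes "a \<le> b" "\<alpha> > 0" "continuous_on {a..b} f" "\<And>t. t \<in> {a..b} \<Longrightarrow> \<bar>f t\<bar> \<le> B"
  shows "\<bar>integral {a..b} (\<lambda>t. (b - t) powr (\<alpha> - 1) * f t)\<bar> \<le> B * ((b - a) powr \<alpha> / \<alpha>)"
  using kernel_prod_bound[of a b "\<alpha> - 1" f B] assms by simp

lemma cont_bound:
  fixes f :: "real \<Rightarrow> real"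
  assumes "continuous_on {a..b} f"
  obtains M where "M \<ge> 0" "\<And>t. t \<in> {a..b} \<Longrightarrow> \<bar>f t\<bar> \<le> M"
proof -
  have "bounded (f ` {a..b})" by (intro compact_imp_bounded compact_continuous_image assms) auto
  then obtain M where M: "\<And>t. t \<in> {a..b} \<Longrightarrow> \<bar>f t\<bar> \<le> M"
    unfolding bounded_iff by (metis imageI real_norm_def)
  show ?thesis by (rule that[of "max M 0"]) (use M in force)+
qed

lemma curve_cont_L2:
  fixes L2 :: "real \<Rightarrow> real \<Rightarrow> real \<Rightarrow> real"
  assumes C2: "continuous_on ({a..b} \<times> UNIV \<times> UNIV) (\<lambda>(t, x, v). L2 t x v)"
    and X: "continuous_on {a..b} X" and V: "continuous_on {a..b} V"
  shows "continuous_on {a..b} (\<lambda>t. L2 t (X t) (V t))"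
proof -
  have "continuous_on {a..b} (\<lambda>t. (t, X t, V t))" by (intro continuous_intros X V)
  from continuous_on_compose2[OF C2 this] show ?thesis by auto
qed

lemma expansion:
  fixes L L1 L2 L3 :: "real \<Rightarrow> real \<Rightarrow> real \<Rightarrow> real" and Y DY u1 u0 v1 v0 :: "real \<Rightarrow> real"
  assumes ab: "a < b" and al: "0 < \<alpha>"
    and D1: "\<forall>t\<in>{a..b}. \<forall>x v. ((\<lambda>s. L s x v) has_real_derivative L1 t x v) (at t within {a..b})"
    and D2: "\<forall>t\<in>{a..b}. \<forall>x v. ((\<lambda>z. L t z v) has_real_derivative L2 t x v) (at x)"
    and D3: "\<forall>t\<in>{a..b}. \<forall>x v. ((\<lambda>w. L t x w) has_real_derivative L3 t x v) (at v)"
    and C2: "continuous_on ({a..b} \<times> UNIV \<times> UNIV) (\<lambda>(t, x, v). L2 t x v)"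
    and C3: "continuous_on ({a..b} \<times> UNIV \<times> UNIV) (\<lambda>(t, x, v). L3 t x v)"
    and cY: "continuous_on {a..b} Y" and cDY: "continuous_on {a..b} DY"
    and cu1: "continuous_on {a..b} u1" and cu0: "continuous_on {a..b} u0"
    and cv1: "continuous_on {a..b} v1" and cv0: "continuous_on {a..b} v0"
    and e: "\<epsilon> > 0"
  shows "\<exists>\<delta>>0. \<forall>e1 e2. \<bar>e1\<bar> + \<bar>e2\<bar> < \<delta> \<longrightarrow>
    \<bar>integral {a..b} (\<lambda>t. (b - t) powr (\<alpha> - 1) * L t (Y t + e1 * u1 t + e2 * u0 t) (DY t + e1 * v1 t + e2 * v0 t))
     - integral {a..b} (\<lambda>t. (b - t) powr (\<alpha> - 1) * L t (Y t) (DY t))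
     - integral {a..b} (\<lambda>t. (b - t) powr (\<alpha> - 1) * (L2 t (Y t) (DY t) * u1 t + L3 t (Y t) (DY t) * v1 t)) * e1
     - integral {a..b} (\<lambda>t. (b - t) powr (\<alpha> - 1) * (L2 t (Y t) (DY t) * u0 t + L3 t (Y t) (DY t) * v0 t)) * e2\<bar>
    \<le> \<epsilon> * (\<bar>e1\<bar> + \<bar>e2\<bar>)"
proof -
  define w where "w t = (b - t) powr (\<alpha> - 1)" for t
  define W where "W = (b - a) powr \<alpha> / \<alpha>"
  have W: "W \<ge> 0" using al by (simp add: W_def)
  obtain MY where MY: "\<And>t. t \<in> {a..b} \<Longrightarrow> \<bar>Y t\<bar> \<le> MY" using cont_bound[OF cY] by blast
  obtain MD where MD: "\<And>t. t \<in> {a..b} \<Longrightarrow> \<bar>DY t\<bar> \<le> MD" using cont_bound[OF cDY] by blast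
  obtain N1 where N1: "\<And>t. t \<in> {a..b} \<Longrightarrow> \<bar>u1 t\<bar> \<le> N1" using cont_bound[OF cu1] by blast
  obtain N2 where N2: "\<And>t. t \<in> {a..b} \<Longrightarrow> \<bar>u0 t\<bar> \<le> N2" using cont_bound[OF cu0] by blast
  obtain N3 where N3: "\<And>t. t \<in> {a..b} \<Longrightarrow> \<bar>v1 t\<bar> \<le> N3" using cont_bound[OF cv1] by blast
  obtain N4 where N4: "\<And>t. t \<in> {a..b} \<Longrightarrow> \<bar>v0 t\<bar> \<le> N4" using cont_bound[OF cv0] by blast
  define M where "M = max MY MD"
  define N where "N = max 1 (max (max N1 N2) (max N3 N4))"
  have N: "N \<ge> 1" by (simp add: N_def)
  have Nb: "\<bar>u1 t\<bar> \<le> N" "\<bar>u0 t\<bar> \<le> N" "\<bar>v1 t\<bar> \<le> N" "\<bar>v0 t\<bar> \<le> N" if "t \<in> {a..b}" for t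
    using N1[OF that] N2[OF that] N3[OF that] N4[OF that] unfolding N_def by auto
  have Mb: "\<bar>Y t\<bar> \<le> M" "\<bar>DY t\<bar> \<le> M" if "t \<in> {a..b}" for t
    using MY[OF that] MD[OF that] unfolding M_def by auto
  define \<epsilon>' where "\<epsilon>' = \<epsilon> / (2 * N * W + 1)"
  have NW: "2 * N * W \<ge> 0" using N W by simp
  have \<epsilon>': "\<epsilon>' > 0" unfolding \<epsilon>'_def using e NW by (intro divide_pos_pos) auto
  obtain d where d: "d > 0" and dd: "\<And>t x v h k. t \<in> {a..b} \<Longrightarrow> \<bar>x\<bar> \<le> M \<Longrightarrow> \<bar>v\<bar> \<le> M \<Longrightarrow> \<bar>h\<bar> + \<bar>k\<bar> < d \<Longrightarrow>
     \<bar>L t (x + h) (v + k) - L t x v - L2 t x v * h - L3 t x v * k\<bar> \<le> \<epsilon>' * (\<bar>h\<bar> + \<bar>k\<bar>)"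
    using remainder3[OF D2 D3 C2 C3 \<epsilon>', of M] by blast
  show ?thesis
  proof (intro exI[of _ "d / (2 * N)"] conjI allI impI)
    show "d / (2 * N) > 0" using d N by simp
    fix e1 e2 :: real assume small: "\<bar>e1\<bar> + \<bar>e2\<bar> < d / (2 * N)"
    define E where "E = \<bar>e1\<bar> + \<bar>e2\<bar>"
    have E: "E \<ge> 0" by (simp add: E_def)
    define h where "h t = e1 * u1 t + e2 * u0 t" for t
    define k where "k t = e1 * v1 t + e2 * v0 t" for t
    have hb: "\<bar>h t\<bar> \<le> N * E" "\<bar>k t\<bar> \<le> N * E" if t: "t \<in> {a..b}" for t
    proof -
      have "\<bar>h t\<bar> \<le> \<bar>e1\<bar> * \<bar>u1 t\<bar> + \<bar>e2\<bar> * \<bar>u0 t\<bar>" unfolding h_def by (metis abs_mult abs_triangle_ineq)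
      also have "\<dots> \<le> \<bar>e1\<bar> * N + \<bar>e2\<bar> * N" using Nb[OF t] by (intro add_mono mult_left_mono) auto
      finally show "\<bar>h t\<bar> \<le> N * E" by (simp add: E_def algebra_simps)
      have "\<bar>k t\<bar> \<le> \<bar>e1\<bar> * \<bar>v1 t\<bar> + \<bar>e2\<bar> * \<bar>v0 t\<bar>" unfolding k_def by (metis abs_mult abs_triangle_ineq)
      also have "\<dots> \<le> \<bar>e1\<bar> * N + \<bar>e2\<bar> * N" using Nb[OF t] by (intro add_mono mult_left_mono) auto
      finally show "\<bar>k t\<bar> \<le> N * E" by (simp add: E_def algebra_simps)
    qed
    have NE: "2 * N * E < d"
    proof -
      have "E < d / (2 * N)" using small by (simp add: E_def)
      then have "(2 * N) * E < (2 * N) * (d / (2 * N))" using N by (intro mult_strict_left_mono) auto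
      then show ?thesis using N by simp
    qed
    define \<rho> where "\<rho> t = L t (Y t + h t) (DY t + k t) - L t (Y t) (DY t) - L2 t (Y t) (DY t) * h t - L3 t (Y t) (DY t) * k t" for t
    have \<rho>b: "\<bar>\<rho> t\<bar> \<le> \<epsilon>' * (2 * N * E)" if t: "t \<in> {a..b}" for t
    proof -
      have hk: "\<bar>h t\<bar> + \<bar>k t\<bar> \<le> 2 * N * E" using hb[OF t] by simp
      have "\<bar>\<rho> t\<bar> \<le> \<epsilon>' * (\<bar>h t\<bar> + \<bar>k t\<bar>)"
        unfolding \<rho>_def by (rule dd) (use t Mb[OF t] hk NE in auto)
      also have "\<dots> \<le> \<epsilon>' * (2 * N * E)" using hk \<epsilon>' by (intro mult_left_mono) auto
      finally show ?thesis .
    qed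
    have ch: "continuous_on {a..b} h" "continuous_on {a..b} k"
      unfolding h_def k_def by (intro continuous_intros cu1 cu0 cv1 cv0)+
    have cA: "continuous_on {a..b} (\<lambda>t. L t (Y t + h t) (DY t + k t))"
      by (rule curve_cont3[OF D1 D2 D3 C2 C3]) (intro continuous_intros cY cDY ch)+
    have cB: "continuous_on {a..b} (\<lambda>t. L t (Y t) (DY t))"
      by (rule curve_cont3[OF D1 D2 D3 C2 C3 cY cDY])
    have cL2: "continuous_on {a..b} (\<lambda>t. L2 t (Y t) (DY t))" by (rule curve_cont_L2[OF C2 cY cDY])
    have cL3: "continuous_on {a..b} (\<lambda>t. L3 t (Y t) (DY t))" by (rule curve_cont_L2[OF C3 cY cDY])
    have c\<rho>: "continuous_on {a..b} \<rho>" unfolding \<rho>_def by (intro continuous_intros cA cB cL2 cL3 ch)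
    note wi = wint[OF less_imp_le[OF ab] al]
    have iA: "((\<lambda>t. w t * L t (Y t + h t) (DY t + k t)) has_integral integral {a..b} (\<lambda>t. w t * L t (Y t + h t) (DY t + k t))) {a..b}"
      unfolding w_def by (intro integrable_integral wi cA)
    have iB: "((\<lambda>t. w t * L t (Y t) (DY t)) has_integral integral {a..b} (\<lambda>t. w t * L t (Y t) (DY t))) {a..b}"
      unfolding w_def by (intro integrable_integral wi cB)
    have i1: "((\<lambda>t. w t * (L2 t (Y t) (DY t) * u1 t + L3 t (Y t) (DY t) * v1 t)) has_integral
        integral {a..b} (\<lambda>t. w t * (L2 t (Y t) (DY t) * u1 t + L3 t (Y t) (DY t) * v1 t))) {a..b}"
      unfolding w_def by (intro integrable_integral wi continuous_intros cL2 cL3 cu1 cv1)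
    have i0: "((\<lambda>t. w t * (L2 t (Y t) (DY t) * u0 t + L3 t (Y t) (DY t) * v0 t)) has_integral
        integral {a..b} (\<lambda>t. w t * (L2 t (Y t) (DY t) * u0 t + L3 t (Y t) (DY t) * v0 t))) {a..b}"
      unfolding w_def by (intro integrable_integral wi continuous_intros cL2 cL3 cu0 cv0)
    have iall: "((\<lambda>t. w t * L t (Y t + h t) (DY t + k t) - w t * L t (Y t) (DY t)
          - w t * (L2 t (Y t) (DY t) * u1 t + L3 t (Y t) (DY t) * v1 t) * e1
          - w t * (L2 t (Y t) (DY t) * u0 t + L3 t (Y t) (DY t) * v0 t) * e2) has_integral
        integral {a..b} (\<lambda>t. w t * L t (Y t + h t) (DY t + k t)) - integral {a..b} (\<lambda>t. w t * L t (Y t) (DY t))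
        - integral {a..b} (\<lambda>t. w t * (L2 t (Y t) (DY t) * u1 t + L3 t (Y t) (DY t) * v1 t)) * e1
        - integral {a..b} (\<lambda>t. w t * (L2 t (Y t) (DY t) * u0 t + L3 t (Y t) (DY t) * v0 t)) * e2) {a..b}"
      by (intro has_integral_diff has_integral_mult_left iA iB i1 i0)
    have feq: "w t * L t (Y t + h t) (DY t + k t) - w t * L t (Y t) (DY t)
          - w t * (L2 t (Y t) (DY t) * u1 t + L3 t (Y t) (DY t) * v1 t) * e1
          - w t * (L2 t (Y t) (DY t) * u0 t + L3 t (Y t) (DY t) * v0 t) * e2 = w t * \<rho> t" for t
      unfolding \<rho>_def h_def k_def by (simp add: algebra_simps)
    have iR: "((\<lambda>t. w t * \<rho> t) has_integral
        integral {a..b} (\<lambda>t. w t * L t (Y t + h t) (DY t + k t)) - integral {a..b} (\<lambda>t. w t * L t (Y t) (DY t))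
        - integral {a..b} (\<lambda>t. w t * (L2 t (Y t) (DY t) * u1 t + L3 t (Y t) (DY t) * v1 t)) * e1
        - integral {a..b} (\<lambda>t. w t * (L2 t (Y t) (DY t) * u0 t + L3 t (Y t) (DY t) * v0 t)) * e2) {a..b}"
      using iall unfolding feq .
    have "\<bar>integral {a..b} (\<lambda>t. w t * \<rho> t)\<bar> \<le> \<epsilon>' * (2 * N * E) * W"
      unfolding w_def W_def by (rule wbound[OF less_imp_le[OF ab] al c\<rho> \<rho>b])
    also have "\<dots> = (\<epsilon>' * (2 * N * W)) * E" by (simp add: algebra_simps)
    also have "\<dots> \<le> \<epsilon> * E"
    proof (rule mult_right_mono[OF _ E])
      have "\<epsilon>' * (2 * N * W) = \<epsilon> * ((2 * N * W) / (2 * N * W + 1))"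
        unfolding \<epsilon>'_def by simp
      also have "\<dots> \<le> \<epsilon> * 1" using e NW by (intro mult_left_mono) auto
      finally show "\<epsilon>' * (2 * N * W) \<le> \<epsilon>" by simp
    qed
    finally have fin: "\<bar>integral {a..b} (\<lambda>t. w t * \<rho> t)\<bar> \<le> \<epsilon> * E" .
    show "\<bar>integral {a..b} (\<lambda>t. (b - t) powr (\<alpha> - 1) * L t (Y t + e1 * u1 t + e2 * u0 t) (DY t + e1 * v1 t + e2 * v0 t))
     - integral {a..b} (\<lambda>t. (b - t) powr (\<alpha> - 1) * L t (Y t) (DY t))
     - integral {a..b} (\<lambda>t. (b - t) powr (\<alpha> - 1) * (L2 t (Y t) (DY t) * u1 t + L3 t (Y t) (DY t) * v1 t)) * e1
     - integral {a..b} (\<lambda>t. (b - t) powr (\<alpha> - 1) * (L2 t (Y t) (DY t) * u0 t + L3 t (Y t) (DY t) * v0 t)) * e2\<bar>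
    \<le> \<epsilon> * (\<bar>e1\<bar> + \<bar>e2\<bar>)"
      using fin integral_unique[OF iR] unfolding w_def h_def k_def E_def by (simp add: add.assoc)
  qed
qed

lemma expansion_cont:
  fixes L L1 L2 L3 :: "real \<Rightarrow> real \<Rightarrow> real \<Rightarrow> real" and Y DY u1 u0 v1 v0 :: "real \<Rightarrow> real"
  assumes ab: "a < b" and al: "0 < \<alpha>"
    and D1: "\<forall>t\<in>{a..b}. \<forall>x v. ((\<lambda>s. L s x v) has_real_derivative L1 t x v) (at t within {a..b})"
    and D2: "\<forall>t\<in>{a..b}. \<forall>x v. ((\<lambda>z. L t z v) has_real_derivative L2 t x v) (at x)"
    and D3: "\<forall>t\<in>{a..b}. \<forall>x v. ((\<lambda>w. L t x w) has_real_derivative L3 t x v) (at v)"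
    and C2: "continuous_on ({a..b} \<times> UNIV \<times> UNIV) (\<lambda>(t, x, v). L2 t x v)"
    and C3: "continuous_on ({a..b} \<times> UNIV \<times> UNIV) (\<lambda>(t, x, v). L3 t x v)"
    and cY: "continuous_on {a..b} Y" and cDY: "continuous_on {a..b} DY"
    and cu1: "continuous_on {a..b} u1" and cu0: "continuous_on {a..b} u0"
    and cv1: "continuous_on {a..b} v1" and cv0: "continuous_on {a..b} v0"
  shows "continuous_on UNIV (\<lambda>e2. integral {a..b} (\<lambda>t. (b - t) powr (\<alpha> - 1) * L t (Y t + e1 * u1 t + e2 * u0 t) (DY t + e1 * v1 t + e2 * v0 t)))"
proof -
  define W where "W = (b - a) powr \<alpha> / \<alpha>"
  have W: "W \<ge> 0" using al by (simp add: W_def)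
  obtain MY where MY: "\<And>t. t \<in> {a..b} \<Longrightarrow> \<bar>Y t\<bar> \<le> MY" using cont_bound[OF cY] by blast
  obtain MD where MD: "\<And>t. t \<in> {a..b} \<Longrightarrow> \<bar>DY t\<bar> \<le> MD" using cont_bound[OF cDY] by blast
  obtain N1 where N1: "\<And>t. t \<in> {a..b} \<Longrightarrow> \<bar>u1 t\<bar> \<le> N1" using cont_bound[OF cu1] by blast
  obtain N2 where N2: "\<And>t. t \<in> {a..b} \<Longrightarrow> \<bar>u0 t\<bar> \<le> N2" using cont_bound[OF cu0] by blast
  obtain N3 where N3: "\<And>t. t \<in> {a..b} \<Longrightarrow> \<bar>v1 t\<bar> \<le> N3" using cont_bound[OF cv1] by blast
  obtain N4 where N4: "\<And>t. t \<in> {a..b} \<Longrightarrow> \<bar>v0 t\<bar> \<le> N4" using cont_bound[OF cv0] by blast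
  define M where "M = max MY MD"
  define N where "N = max 1 (max (max N1 N2) (max N3 N4))"
  have N: "N \<ge> 1" by (simp add: N_def)
  have Nb: "\<bar>u1 t\<bar> \<le> N" "\<bar>u0 t\<bar> \<le> N" "\<bar>v1 t\<bar> \<le> N" "\<bar>v0 t\<bar> \<le> N" if "t \<in> {a..b}" for t
    using N1[OF that] N2[OF that] N3[OF that] N4[OF that] unfolding N_def by auto
  have Mb: "\<bar>Y t\<bar> \<le> M" "\<bar>DY t\<bar> \<le> M" if "t \<in> {a..b}" for t
    using MY[OF that] MD[OF that] unfolding M_def by auto
  define f where "f e2 = integral {a..b} (\<lambda>t. (b - t) powr (\<alpha> - 1) * L t (Y t + e1 * u1 t + e2 * u0 t) (DY t + e1 * v1 t + e2 * v0 t))" for e2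
  have cf: "continuous_on {a..b} (\<lambda>t. L t (Y t + e1 * u1 t + e2 * u0 t) (DY t + e1 * v1 t + e2 * v0 t))" for e2
    by (rule curve_cont3[OF D1 D2 D3 C2 C3]) (intro continuous_intros cY cDY cu1 cu0 cv1 cv0)+
  note wi = wint[OF less_imp_le[OF ab] al]
  have "continuous_on UNIV f"
    unfolding continuous_on_iff
  proof (intro ballI allI impI)
    fix x \<epsilon> :: real assume e: "\<epsilon> > 0"
    define R where "R = M + N * (\<bar>e1\<bar> + \<bar>x\<bar> + 1)"
    obtain B where B: "B \<ge> 0" "\<And>t x v x' v'. t \<in> {a..b} \<Longrightarrow> \<bar>x\<bar> \<le> R \<Longrightarrow> \<bar>v\<bar> \<le> R \<Longrightarrow> \<bar>x'\<bar> \<le> R \<Longrightarrow> \<bar>v'\<bar> \<le> R \<Longrightarrow>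
       \<bar>L t x' v' - L t x v\<bar> \<le> B * (\<bar>x' - x\<bar> + \<bar>v' - v\<bar>)"
      using lipschitz3[OF D2 D3 C2 C3, of R] by blast
    define C where "C = 2 * B * N * W"
    have C: "C \<ge> 0" using B N W by (simp add: C_def)
    define d where "d = min 1 (\<epsilon> / (C + 1))"
    have d: "d > 0" using e C by (simp add: d_def)
    show "\<exists>d>0. \<forall>x'\<in>UNIV. dist x' x < d \<longrightarrow> dist (f x') (f x) < \<epsilon>"
    proof (intro exI[of _ d] conjI ballI impI d)
      fix x' assume dx: "dist x' x < d"
      have dx1: "\<bar>x' - x\<bar> < 1" "\<bar>x' - x\<bar> < \<epsilon> / (C + 1)" using dx by (auto simp: d_def dist_real_def)
      have pb: "\<bar>L t (Y t + e1 * u1 t + x' * u0 t) (DY t + e1 * v1 t + x' * v0 t) - L t (Y t + e1 * u1 t + x * u0 t) (DY t + e1 * v1 t + x * v0 t)\<bar>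
          \<le> 2 * B * N * \<bar>x' - x\<bar>" if t: "t \<in> {a..b}" for t
      proof -
        have bnd: "\<bar>A + e1 * p + z * q\<bar> \<le> R" if "\<bar>A\<bar> \<le> M" "\<bar>p\<bar> \<le> N" "\<bar>q\<bar> \<le> N" "\<bar>z\<bar> \<le> \<bar>x\<bar> + 1" for A p q z
        proof -
          have t1: "\<bar>A + e1 * p + z * q\<bar> \<le> \<bar>A + e1 * p\<bar> + \<bar>z * q\<bar>" by (rule abs_triangle_ineq)
          have t2: "\<bar>A + e1 * p\<bar> \<le> \<bar>A\<bar> + \<bar>e1 * p\<bar>" by (rule abs_triangle_ineq)
          have "\<bar>A + e1 * p + z * q\<bar> \<le> \<bar>A\<bar> + \<bar>e1\<bar> * \<bar>p\<bar> + \<bar>z\<bar> * \<bar>q\<bar>"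
            using t1 t2 unfolding abs_mult by linarith
          also have "\<dots> \<le> M + \<bar>e1\<bar> * N + (\<bar>x\<bar> + 1) * N"
            using that by (intro add_mono mult_mono) auto
          finally show ?thesis by (simp add: R_def algebra_simps)
        qed
        have zx: "\<bar>x'\<bar> \<le> \<bar>x\<bar> + 1" "\<bar>x\<bar> \<le> \<bar>x\<bar> + 1" using dx1 by auto
        have "\<bar>L t (Y t + e1 * u1 t + x' * u0 t) (DY t + e1 * v1 t + x' * v0 t) - L t (Y t + e1 * u1 t + x * u0 t) (DY t + e1 * v1 t + x * v0 t)\<bar>
          \<le> B * (\<bar>(Y t + e1 * u1 t + x' * u0 t) - (Y t + e1 * u1 t + x * u0 t)\<bar> + \<bar>(DY t + e1 * v1 t + x' * v0 t) - (DY t + e1 * v1 t + x * v0 t)\<bar>)"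
          by (rule B(2)[OF t]) (intro bnd Mb[OF t] Nb[OF t] zx)+
        also have "\<dots> = B * (\<bar>x' - x\<bar> * \<bar>u0 t\<bar> + \<bar>x' - x\<bar> * \<bar>v0 t\<bar>)"
        proof -
          have "(Y t + e1 * u1 t + x' * u0 t) - (Y t + e1 * u1 t + x * u0 t) = (x' - x) * u0 t"
            "(DY t + e1 * v1 t + x' * v0 t) - (DY t + e1 * v1 t + x * v0 t) = (x' - x) * v0 t"
            by (simp_all add: algebra_simps)
          then show ?thesis by (simp only: abs_mult)
        qed
        also have "\<dots> \<le> B * (\<bar>x' - x\<bar> * N + \<bar>x' - x\<bar> * N)"
          using Nb[OF t] B(1) by (intro mult_left_mono add_mono) auto
        finally show ?thesis by (simp add: algebra_simps)
      qed
      have "f x' - f x = integral {a..b} (\<lambda>t. (b - t) powr (\<alpha> - 1) *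
          (L t (Y t + e1 * u1 t + x' * u0 t) (DY t + e1 * v1 t + x' * v0 t) - L t (Y t + e1 * u1 t + x * u0 t) (DY t + e1 * v1 t + x * v0 t)))"
      proof -
        have i1: "(\<lambda>t. (b - t) powr (\<alpha> - 1) * L t (Y t + e1 * u1 t + x' * u0 t) (DY t + e1 * v1 t + x' * v0 t)) integrable_on {a..b}"
          by (rule wi[OF cf])
        have i2: "(\<lambda>t. (b - t) powr (\<alpha> - 1) * L t (Y t + e1 * u1 t + x * u0 t) (DY t + e1 * v1 t + x * v0 t)) integrable_on {a..b}"
          by (rule wi[OF cf])
        show ?thesis unfolding f_def integral_diff[OF i1 i2, symmetric] by (simp only: right_diff_distrib)
      qed
      also have "\<bar>\<dots>\<bar> \<le> (2 * B * N * \<bar>x' - x\<bar>) * W"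
        unfolding W_def by (rule wbound[OF less_imp_le[OF ab] al]) (intro continuous_intros cf, use pb in auto)
      also have "\<dots> = C * \<bar>x' - x\<bar>" by (simp add: C_def)
      also have "\<dots> \<le> C * (\<epsilon> / (C + 1))" using dx1 C by (intro mult_left_mono) auto
      also have "\<dots> = \<epsilon> * (C / (C + 1))" by simp
      also have "\<dots> < \<epsilon> * 1" using e C by (intro mult_strict_left_mono) auto
      finally show "dist (f x') (f x) < \<epsilon>" by (simp add: dist_real_def)
    qed
  qed
  then show ?thesis unfolding f_def .
qed

lemma bump_lower:
  assumes "\<bar>t - c\<bar> \<le> r / 2" "r > 0"
  shows "bump c r t \<ge> (3 * r\<^sup>2 / 4)\<^sup>2"
proof -
  have "\<bar>t - c\<bar> * \<bar>t - c\<bar> \<le> (r / 2) * (r / 2)" using assms by (intro mult_mono) auto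
  then have "(t - c)\<^sup>2 \<le> r\<^sup>2 / 4" by (simp add: power2_eq_square)
  then have "3 * r\<^sup>2 / 4 \<le> r\<^sup>2 - (t - c)\<^sup>2" by linarith
  then have ge: "3 * r\<^sup>2 / 4 \<le> max 0 (r\<^sup>2 - (t - c)\<^sup>2)" by (rule max.coboundedI2)
  have "0 \<le> 3 * r\<^sup>2 / 4" by simp
  from power_mono[OF ge this, of 2] show ?thesis by (simp add: bump_def)
qed

lemma bump_nonzero:
  fixes E :: "real \<Rightarrow> real"
  assumes cE: "continuous_on {a<..<b} E" and t1: "t1 \<in> {a<..<b}" and E1: "E t1 \<noteq> 0"
  shows "\<exists>c r. r > 0 \<and> a < c - r \<and> c + r < b \<and> integral {a..b} (\<lambda>t. bump c r t * E t) \<noteq> 0"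
proof -
  define \<sigma> where "\<sigma> = (if E t1 > 0 then 1 else -1::real)"
  have \<sigma>: "\<sigma> * \<sigma> = 1" "\<sigma> * E t1 = \<bar>E t1\<bar>" using E1 by (auto simp: \<sigma>_def)
  define e where "e = \<bar>E t1\<bar> / 2"
  have e: "e > 0" using E1 by (simp add: e_def)
  obtain d where d: "d > 0" and dd: "\<And>t. t \<in> {a<..<b} \<Longrightarrow> dist t t1 < d \<Longrightarrow> dist (E t) (E t1) < e"
    using cE t1 e unfolding continuous_on_iff by metis
  define m0 where "m0 = min d (min (t1 - a) (b - t1))"
  have m0: "m0 > 0" "m0 \<le> d" "m0 \<le> t1 - a" "m0 \<le> b - t1" using d t1 by (auto simp: m0_def)
  define r where "r = m0 / 2"
  have r: "r > 0" "r < d" "a < t1 - r" "t1 + r < b" using m0 unfolding r_def by linarith+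
  define G where "G t = \<sigma> * E t" for t
  have Gb: "G t \<ge> e" if "t \<in> {t1 - r..t1 + r}" for t
  proof -
    have "t \<in> {a<..<b}" "dist t t1 < d" using that r by (auto simp: dist_real_def)
    from dd[OF this] have "\<bar>E t - E t1\<bar> < e" by (simp add: dist_real_def)
    then have "\<bar>\<sigma> * E t - \<sigma> * E t1\<bar> < e" using E1 by (auto simp: \<sigma>_def)
    then show ?thesis using \<sigma>(2) unfolding G_def e_def by linarith
  qed
  define m where "m = (3 * r\<^sup>2 / 4)\<^sup>2 * e"
  have m: "m > 0" using r e by (simp add: m_def)
  have cG: "continuous_on {t1 - r..t1 + r} (\<lambda>t. bump t1 r t * G t)"
    unfolding G_def using r
    by (intro continuous_intros continuous_on_subset[OF bump_cont] continuous_on_subset[OF cE]) auto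
  have step: "((\<lambda>t. if t \<in> cbox (t1 - r / 2) (t1 + r / 2) then m else 0) has_integral r * m) (cbox (t1 - r) (t1 + r))"
  proof -
    have "((\<lambda>t. m) has_integral r * m) {t1 - r / 2..t1 + r / 2}"
      using has_integral_const_real[of m "t1 - r/2" "t1 + r/2"] r by simp
    then have "((\<lambda>t. m) has_integral r * m) (cbox (t1 - r / 2) (t1 + r / 2))" by simp
    from has_integral_restrict_closed_subinterval[OF this, of "t1 - r" "t1 + r"] r show ?thesis by simp
  qed
  have "r * m \<le> integral {t1 - r..t1 + r} (\<lambda>t. bump t1 r t * G t)"
  proof (rule has_integral_le[OF step[unfolded cbox_interval]])
    show "((\<lambda>t. bump t1 r t * G t) has_integral integral {t1 - r..t1 + r} (\<lambda>t. bump t1 r t * G t)) {t1 - r..t1 + r}"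
      by (intro integrable_integral integrable_continuous_interval cG)
    fix t assume t: "t \<in> {t1 - r..t1 + r}"
    show "(if t \<in> {t1 - r / 2..t1 + r / 2} then m else 0) \<le> bump t1 r t * G t"
    proof (cases "t \<in> {t1 - r / 2..t1 + r / 2}")
      case True
      have "\<bar>t - t1\<bar> \<le> r / 2" using True unfolding atLeastAtMost_iff abs_le_iff by linarith
      from bump_lower[OF this r(1)] have "(3 * r\<^sup>2 / 4)\<^sup>2 \<le> bump t1 r t" .
      then have "m \<le> bump t1 r t * G t" unfolding m_def
        using Gb[OF t] e bump_nonneg[of t1 r t] by (intro mult_mono) auto
      then show ?thesis using True by simp
    next
      case False
      have "0 \<le> bump t1 r t * G t" using Gb[OF t] e bump_nonneg[of t1 r t] by simp
      moreover have "(if t \<in> {t1 - r / 2..t1 + r / 2} then m else 0) = 0" using False by (rule if_not_P)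
      ultimately show ?thesis by linarith
    qed
  qed
  then have pos: "integral {t1 - r..t1 + r} (\<lambda>t. bump t1 r t * G t) > 0" using m r by (smt (verit) mult_pos_pos)
  have hi: "((\<lambda>t. bump t1 r t * E t) has_integral \<sigma> * integral {t1 - r..t1 + r} (\<lambda>t. bump t1 r t * G t)) {t1 - r..t1 + r}"
  proof -
    have "((\<lambda>t. \<sigma> * (bump t1 r t * G t)) has_integral \<sigma> * integral {t1 - r..t1 + r} (\<lambda>t. bump t1 r t * G t)) {t1 - r..t1 + r}"
      by (intro has_integral_mult_right integrable_integral integrable_continuous_interval cG)
    moreover have "\<sigma> * (bump t1 r t * G t) = bump t1 r t * E t" for t
      unfolding G_def using \<sigma>(1) by (simp add: mult_ac)
    ultimately show ?thesis by simp
  qed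
  have "((\<lambda>t. bump t1 r t * E t) has_integral \<sigma> * integral {t1 - r..t1 + r} (\<lambda>t. bump t1 r t * G t)) {a..b}"
  proof (rule has_integral_support[OF _ _ hi])
    show "{t1 - r..t1 + r} \<subseteq> {a..b}" using r by auto
    fix x assume "x \<in> {a..b}" "x \<notin> {t1 - r..t1 + r}"
    then have "\<bar>x - t1\<bar> \<ge> r" by auto
    then show "bump t1 r x * E x = 0" using bump_zero[of r x t1] r by simp
  qed
  then have "integral {a..b} (\<lambda>t. bump t1 r t * E t) = \<sigma> * integral {t1 - r..t1 + r} (\<lambda>t. bump t1 r t * G t)"
    by (rule integral_unique)
  also have "\<dots> \<noteq> 0" using pos \<sigma>(1) by auto
  finally show ?thesis using r by blast
qed

lemma interior_deriv:
  fixes y y' :: "real \<Rightarrow> real"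
  assumes "\<forall>t\<in>{a..b}. (y has_real_derivative y' t) (at t within {a..b})" "\<tau> \<in> {a<..<b}"
  shows "(y has_real_derivative y' \<tau>) (at \<tau>)"
proof -
  have "\<tau> \<in> interior {a..b}" using assms(2) by simp
  then have "at \<tau> within {a..b} = at \<tau>" by (rule at_within_interior)
  moreover have "(y has_real_derivative y' \<tau>) (at \<tau> within {a..b})" using assms by auto
  ultimately show ?thesis by simp
qed

lemma lCD_lin:
  fixes y y' :: "real \<Rightarrow> real"
  assumes ab: "a < b" and be: "0 < \<beta>" "\<beta> < 1"
    and dy: "\<forall>t\<in>{a..b}. (y has_real_derivative y' t) (at t within {a..b})"
    and cy: "continuous_on {a..b} y'" and t: "t \<in> {a..b}"
  shows "lCD \<beta> a (\<lambda>s. y s + e1 * bump c1 r1 s + e2 * bump c0 r0 s) t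
       = lCD \<beta> a y t + e1 * lCD \<beta> a (bump c1 r1) t + e2 * lCD \<beta> a (bump c0 r0) t"
proof -
  define k where "k \<tau> = (t - \<tau>) powr (- \<beta>)" for \<tau>
  have dz: "deriv (\<lambda>s. y s + e1 * bump c1 r1 s + e2 * bump c0 r0 s) \<tau> = y' \<tau> + e1 * bumpd c1 r1 \<tau> + e2 * bumpd c0 r0 \<tau>"
    if "\<tau> \<in> {a<..<b}" for \<tau>
  proof (rule DERIV_imp_deriv)
    have "(y has_real_derivative y' \<tau>) (at \<tau>)" by (rule interior_deriv[OF dy that])
    then show "((\<lambda>s. y s + e1 * bump c1 r1 s + e2 * bump c0 r0 s) has_real_derivative y' \<tau> + e1 * bumpd c1 r1 \<tau> + e2 * bumpd c0 r0 \<tau>) (at \<tau>)"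
      by (intro DERIV_add DERIV_cmult bump_deriv)
  qed
  have dyy: "deriv y \<tau> = y' \<tau>" if "\<tau> \<in> {a<..<b}" for \<tau>
    by (rule DERIV_imp_deriv[OF interior_deriv[OF dy that]])
  have neg: "negligible {a, t}" by simp
  have sub: "\<tau> \<in> {a<..<b}" if "\<tau> \<in> {a..t} - {a, t}" for \<tau> using that t by auto
  have i1: "(\<lambda>\<tau>. k \<tau> * y' \<tau>) integrable_on {a..t}"
    unfolding k_def by (rule kernel_prod_integrable) (use t be in \<open>auto intro: continuous_on_subset[OF cy]\<close>)
  have i2: "(\<lambda>\<tau>. k \<tau> * bumpd c r \<tau>) integrable_on {a..t}" for c r
    unfolding k_def by (rule kernel_prod_integrable) (use t be in \<open>auto intro: continuous_on_subset[OF bumpd_cont]\<close>)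
  have "integral {a..t} (\<lambda>\<tau>. k \<tau> * deriv (\<lambda>s. y s + e1 * bump c1 r1 s + e2 * bump c0 r0 s) \<tau>)
      = integral {a..t} (\<lambda>\<tau>. (k \<tau> * y' \<tau> + e1 * (k \<tau> * bumpd c1 r1 \<tau>)) + e2 * (k \<tau> * bumpd c0 r0 \<tau>))"
  proof (rule integral_spike[OF neg])
    fix \<tau> assume "\<tau> \<in> {a..t} - {a, t}"
    from dz[OF sub[OF this]] show "(k \<tau> * y' \<tau> + e1 * (k \<tau> * bumpd c1 r1 \<tau>)) + e2 * (k \<tau> * bumpd c0 r0 \<tau>)
        = k \<tau> * deriv (\<lambda>s. y s + e1 * bump c1 r1 s + e2 * bump c0 r0 s) \<tau>"
      by (simp only: distrib_left mult.left_commute)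
  qed
  also have "\<dots> = integral {a..t} (\<lambda>\<tau>. k \<tau> * y' \<tau> + e1 * (k \<tau> * bumpd c1 r1 \<tau>)) + integral {a..t} (\<lambda>\<tau>. e2 * (k \<tau> * bumpd c0 r0 \<tau>))"
    by (rule integral_add[OF integrable_add[OF i1 integrable_on_mult_right[OF i2]] integrable_on_mult_right[OF i2]])
  also have "integral {a..t} (\<lambda>\<tau>. k \<tau> * y' \<tau> + e1 * (k \<tau> * bumpd c1 r1 \<tau>))
      = integral {a..t} (\<lambda>\<tau>. k \<tau> * y' \<tau>) + integral {a..t} (\<lambda>\<tau>. e1 * (k \<tau> * bumpd c1 r1 \<tau>))"
    by (rule integral_add[OF i1 integrable_on_mult_right[OF i2]])
  finally have A: "integral {a..t} (\<lambda>\<tau>. k \<tau> * deriv (\<lambda>s. y s + e1 * bump c1 r1 s + e2 * bump c0 r0 s) \<tau>)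
      = integral {a..t} (\<lambda>\<tau>. k \<tau> * y' \<tau>) + e1 * integral {a..t} (\<lambda>\<tau>. k \<tau> * bumpd c1 r1 \<tau>)
      + e2 * integral {a..t} (\<lambda>\<tau>. k \<tau> * bumpd c0 r0 \<tau>)" by (simp only: integral_mult_right)
  have B: "integral {a..t} (\<lambda>\<tau>. k \<tau> * deriv y \<tau>) = integral {a..t} (\<lambda>\<tau>. k \<tau> * y' \<tau>)"
  proof (rule integral_spike[OF neg])
    fix \<tau> assume "\<tau> \<in> {a..t} - {a, t}"
    from dyy[OF sub[OF this]] show "k \<tau> * y' \<tau> = k \<tau> * deriv y \<tau>" by simp
  qed
  have Lf: "lCD \<beta> a f t = (1 / Gamma (1 - \<beta>)) * integral {a..t} (\<lambda>\<tau>. k \<tau> * deriv f \<tau>)" for f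
    unfolding lCD_def lRLI_def k_def by simp
  show ?thesis
    unfolding Lf A B deriv_bump_fun by (simp only: distrib_left mult.left_commute)
qed

lemma lCD_bump_cont:
  assumes ab: "a \<le> b" and be: "0 < \<beta>" "\<beta> < 1" and cr: "r > 0" "a < c - r"
  shows "continuous_on {a..b} (lCD \<beta> a (bump c r))"
proof -
  have "continuous_on {a..b} (\<lambda>t. integral {a..t} (\<lambda>\<tau>. (t - \<tau>) powr (-\<beta>) * bumpd c r \<tau>))"
  proof (rule conv_cont[OF ab _ bumpd_cont])
    show "-\<beta> > -1" using be by simp
    fix \<tau> :: real assume "\<tau> \<le> a"
    then have "\<bar>\<tau> - c\<bar> \<ge> r" using cr by auto
    then show "bumpd c r \<tau> = 0" using bump_zero[of r \<tau> c] cr by simp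
  qed
  then have "continuous_on {a..b} (\<lambda>t. (1 / Gamma (1 - \<beta>)) * integral {a..t} (\<lambda>\<tau>. (t - \<tau>) powr (-\<beta>) * bumpd c r \<tau>))"
    by (rule continuous_on_mult_left)
  moreover have "(\<lambda>t. (1 / Gamma (1 - \<beta>)) * integral {a..t} (\<lambda>\<tau>. (t - \<tau>) powr (-\<beta>) * bumpd c r \<tau>)) = lCD \<beta> a (bump c r)"
    by (rule ext) (simp only: lCD_bump)
  ultimately show ?thesis by metis
qed

lemma bump_prod_integrable:
  fixes F :: "real \<Rightarrow> real"
  assumes "continuous_on {a<..<b} F" "r > 0" "a < c - r" "c + r < b"
  shows "(\<lambda>t. bump c r t * F t) integrable_on {a..b}"
proof -
  have "(\<lambda>t. bump c r t * F t) integrable_on {c - r..c + r}"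
    using assms by (intro integrable_continuous_interval continuous_intros continuous_on_subset[OF bump_cont]
        continuous_on_subset[OF assms(1)]) auto
  then have hi: "((\<lambda>t. bump c r t * F t) has_integral integral {c - r..c + r} (\<lambda>t. bump c r t * F t)) {c - r..c + r}"
    by (rule integrable_integral)
  have sb: "{c - r..c + r} \<subseteq> {a..b}" using assms by auto
  have "((\<lambda>t. bump c r t * F t) has_integral integral {c - r..c + r} (\<lambda>t. bump c r t * F t)) {a..b}"
  proof (rule has_integral_support[OF sb _ hi])
    fix x assume "x \<in> {a..b}" "x \<notin> {c - r..c + r}"
    then have "\<bar>x - c\<bar> \<ge> r" by auto
    then show "bump c r x * F x = 0" using bump_zero[of r x c] assms by simp
  qed
  then show ?thesis by blast
qed

lemma lin_identity:
  fixes L L2 L3 :: "real \<Rightarrow> real \<Rightarrow> real \<Rightarrow> real" and y DY :: "real \<Rightarrow> real"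
  assumes ab: "a < b" and al: "0 < \<alpha>" "\<alpha> < 1" and be: "0 < \<beta>" "\<beta> < 1"
    and D2: "\<forall>t\<in>{a..b}. \<forall>x v. ((\<lambda>z. L t z v) has_real_derivative L2 t x v) (at x)"
    and D3: "\<forall>t\<in>{a..b}. \<forall>x v. ((\<lambda>w. L t x w) has_real_derivative L3 t x v) (at v)"
    and C2: "continuous_on ({a..b} \<times> UNIV \<times> UNIV) (\<lambda>(t, x, v). L2 t x v)"
    and C3: "continuous_on ({a..b} \<times> UNIV \<times> UNIV) (\<lambda>(t, x, v). L3 t x v)"
    and cY: "continuous_on {a..b} y" and cDY: "continuous_on {a..b} DY"
    and cr: "r > 0" "a < c - r" "c + r < b"
    and dR: "\<forall>t\<in>{a<..<b}. (\<lambda>s. rRLI (1 - \<beta>) b (\<lambda>t. (b - t) powr (\<alpha> - 1) * d3 L t (y t) (DY t)) s) differentiable (at t)"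
    and cD: "continuous_on {a<..<b} (rRLD \<beta> b (\<lambda>t. (b - t) powr (\<alpha> - 1) * d3 L t (y t) (DY t)))"
  shows "integral {a..b} (\<lambda>t. (b - t) powr (\<alpha> - 1) * (L2 t (y t) (DY t) * bump c r t + L3 t (y t) (DY t) * lCD \<beta> a (bump c r) t))
    = integral {a..b} (\<lambda>t. bump c r t * ((b - t) powr (\<alpha> - 1) * d2 L t (y t) (DY t) + rRLD \<beta> b (\<lambda>t. (b - t) powr (\<alpha> - 1) * d3 L t (y t) (DY t)) t))"
proof -
  define gL where "gL t = (b - t) powr (\<alpha> - 1) * d3 L t (y t) (DY t)" for t
  define w where "w t = (b - t) powr (\<alpha> - 1)" for t
  have gLeq: "gL = (\<lambda>t. (b - t) powr (\<alpha> - 1) * d3 L t (y t) (DY t))" by (rule ext) (simp add: gL_def)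
  define D where "D = lCD \<beta> a (bump c r)"
  have d2e: "d2 L t (y t) (DY t) = L2 t (y t) (DY t)" if "t \<in> {a..b}" for t
    unfolding d2_def by (rule DERIV_imp_deriv) (use D2 that in blast)
  have d3e: "d3 L t (y t) (DY t) = L3 t (y t) (DY t)" if "t \<in> {a..b}" for t
    unfolding d3_def by (rule DERIV_imp_deriv) (use D3 that in blast)
  have cL2: "continuous_on {a..b} (\<lambda>t. L2 t (y t) (DY t))" by (rule curve_cont_L2[OF C2 cY cDY])
  have cL3: "continuous_on {a..b} (\<lambda>t. L3 t (y t) (DY t))" by (rule curve_cont_L2[OF C3 cY cDY])
  have cDD: "continuous_on {a..b} D" unfolding D_def by (rule lCD_bump_cont) (use ab be cr in auto)
  have cb: "continuous_on {a..b} (bump c r)" by (rule continuous_on_subset[OF bump_cont]) simp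
  note wi = wint[OF less_imp_le[OF ab] al(1)]
  have iA: "(\<lambda>t. w t * (L2 t (y t) (DY t) * bump c r t)) integrable_on {a..b}"
    unfolding w_def by (intro wi continuous_intros cL2 cb)
  have iB: "(\<lambda>t. w t * (L3 t (y t) (DY t) * D t)) integrable_on {a..b}"
    unfolding w_def by (intro wi continuous_intros cL3 cDD)
  have "integral {a..b} (\<lambda>t. w t * (L2 t (y t) (DY t) * bump c r t + L3 t (y t) (DY t) * D t))
      = integral {a..b} (\<lambda>t. w t * (L2 t (y t) (DY t) * bump c r t) + w t * (L3 t (y t) (DY t) * D t))"
    by (simp only: distrib_left)
  also have "\<dots> = integral {a..b} (\<lambda>t. w t * (L2 t (y t) (DY t) * bump c r t)) + integral {a..b} (\<lambda>t. w t * (L3 t (y t) (DY t) * D t))"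
    by (rule integral_add[OF iA iB])
  also have "integral {a..b} (\<lambda>t. w t * (L3 t (y t) (DY t) * D t)) = integral {a..b} (\<lambda>t. gL t * D t)"
    by (rule integral_cong) (simp add: gL_def w_def d3e)
  also have "\<dots> = integral {a..b} (\<lambda>t. bump c r t * rRLD \<beta> b gL t)"
    unfolding D_def
  proof (rule ibp_frac[OF ab al be cL3 _ cr])
    show "\<And>t. t \<in> {a..b} \<Longrightarrow> gL t = (b - t) powr (\<alpha> - 1) * L3 t (y t) (DY t)"
      by (simp add: gL_def d3e)
    show "\<forall>t\<in>{a<..<b}. (\<lambda>s. rRLI (1 - \<beta>) b gL s) differentiable (at t)" using dR unfolding gLeq .
    show "continuous_on {a<..<b} (rRLD \<beta> b gL)" using cD unfolding gLeq .
  qed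
  also have "integral {a..b} (\<lambda>t. w t * (L2 t (y t) (DY t) * bump c r t)) = integral {a..b} (\<lambda>t. bump c r t * (w t * d2 L t (y t) (DY t)))"
    by (rule integral_cong) (simp add: d2e mult_ac)
  also have "integral {a..b} (\<lambda>t. bump c r t * (w t * d2 L t (y t) (DY t))) + integral {a..b} (\<lambda>t. bump c r t * rRLD \<beta> b gL t)
      = integral {a..b} (\<lambda>t. bump c r t * (w t * d2 L t (y t) (DY t)) + bump c r t * rRLD \<beta> b gL t)"
  proof (rule integral_add[symmetric])
    show "(\<lambda>t. bump c r t * (w t * d2 L t (y t) (DY t))) integrable_on {a..b}"
    proof (rule integrable_eq[OF iA])
      fix t assume "t \<in> {a..b}"
      then show "w t * (L2 t (y t) (DY t) * bump c r t) = bump c r t * (w t * d2 L t (y t) (DY t))"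
        by (simp add: d2e mult_ac)
    qed
    show "(\<lambda>t. bump c r t * rRLD \<beta> b gL t) integrable_on {a..b}"
      by (rule bump_prod_integrable[OF _ cr]) (use cD in \<open>simp add: gLeq\<close>)
  qed
  finally show ?thesis unfolding D_def w_def gLeq by (simp only: distrib_left)
qed

lemma rRLD_diff:
  fixes gH gF gG \<phi>F \<phi>G :: "real \<Rightarrow> real"
  assumes ab: "a < b" and al: "0 < \<alpha>" "\<alpha> < 1" and be: "0 < \<beta>" "\<beta> < 1" and t: "t \<in> {a<..<b}"
    and gH: "\<And>\<tau>. \<tau> \<in> {a..b} \<Longrightarrow> gH \<tau> = gF \<tau> - lam * gG \<tau>"
    and gF: "\<And>\<tau>. \<tau> \<in> {a..b} \<Longrightarrow> gF \<tau> = (b - \<tau>) powr (\<alpha> - 1) * \<phi>F \<tau>"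
    and gG: "\<And>\<tau>. \<tau> \<in> {a..b} \<Longrightarrow> gG \<tau> = (b - \<tau>) powr (\<alpha> - 1) * \<phi>G \<tau>"
    and cF: "continuous_on {a..b} \<phi>F" and cG: "continuous_on {a..b} \<phi>G"
    and dF: "(\<lambda>s. rRLI (1 - \<beta>) b gF s) differentiable (at t)"
    and dG: "(\<lambda>s. rRLI (1 - \<beta>) b gG s) differentiable (at t)"
  shows "rRLD \<beta> b gH t = rRLD \<beta> b gF t - lam * rRLD \<beta> b gG t"
proof -
  have intg: "(\<lambda>\<tau>. (\<tau> - s) powr (-\<beta>) * g \<tau>) integrable_on {s..b}"
    if s: "s \<in> {a<..<b}" and g: "\<And>\<tau>. \<tau> \<in> {a..b} \<Longrightarrow> g \<tau> = (b - \<tau>) powr (\<alpha> - 1) * \<phi> \<tau>"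
      and c: "continuous_on {a..b} \<phi>" for s g \<phi>
  proof -
    have "(\<lambda>\<tau>. (\<tau> - s) powr (-\<beta>) * ((b - \<tau>) powr (\<alpha> - 1) * \<phi> \<tau>)) absolutely_integrable_on {s..b}"
      by (rule right_abs_int[OF _ al be]) (use s in \<open>auto intro: continuous_on_subset[OF c]\<close>)
    then have "(\<lambda>\<tau>. (\<tau> - s) powr (-\<beta>) * ((b - \<tau>) powr (\<alpha> - 1) * \<phi> \<tau>)) integrable_on {s..b}"
      using absolutely_integrable_on_def by blast
    then show ?thesis
    proof (rule integrable_eq)
      fix \<tau> assume "\<tau> \<in> {s..b}"
      then show "(\<tau> - s) powr (-\<beta>) * ((b - \<tau>) powr (\<alpha> - 1) * \<phi> \<tau>) = (\<tau> - s) powr (-\<beta>) * g \<tau>"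
        using s g[of \<tau>] by simp
    qed
  qed
  have Req: "rRLI (1 - \<beta>) b gH s = rRLI (1 - \<beta>) b gF s - lam * rRLI (1 - \<beta>) b gG s" if s: "s \<in> {a<..<b}" for s
  proof -
    have iF: "(\<lambda>\<tau>. (\<tau> - s) powr (-\<beta>) * gF \<tau>) integrable_on {s..b}" by (rule intg[OF s gF cF])
    have iG: "(\<lambda>\<tau>. lam * ((\<tau> - s) powr (-\<beta>) * gG \<tau>)) integrable_on {s..b}"
      by (rule integrable_on_mult_right[OF intg[OF s gG cG]])
    have "integral {s..b} (\<lambda>\<tau>. (\<tau> - s) powr (-\<beta>) * gH \<tau>)
        = integral {s..b} (\<lambda>\<tau>. (\<tau> - s) powr (-\<beta>) * gF \<tau> - lam * ((\<tau> - s) powr (-\<beta>) * gG \<tau>))"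
    proof (rule integral_cong)
      fix \<tau> assume "\<tau> \<in> {s..b}"
      then have "\<tau> \<in> {a..b}" using s by auto
      then show "(\<tau> - s) powr (-\<beta>) * gH \<tau> = (\<tau> - s) powr (-\<beta>) * gF \<tau> - lam * ((\<tau> - s) powr (-\<beta>) * gG \<tau>)"
        using gH[of \<tau>] by (simp add: right_diff_distrib)
    qed
    also have "\<dots> = integral {s..b} (\<lambda>\<tau>. (\<tau> - s) powr (-\<beta>) * gF \<tau>) - lam * integral {s..b} (\<lambda>\<tau>. (\<tau> - s) powr (-\<beta>) * gG \<tau>)"
      by (simp only: integral_diff[OF iF iG] integral_mult_right)
    finally have X: "integral {s..b} (\<lambda>\<tau>. (\<tau> - s) powr (-\<beta>) * gH \<tau>) = integral {s..b} (\<lambda>\<tau>. (\<tau> - s) powr (-\<beta>) * gF \<tau>) - lam * integral {s..b} (\<lambda>\<tau>. (\<tau> - s) powr (-\<beta>) * gG \<tau>)" .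
    have Lr: "rRLI (1 - \<beta>) b g s = (1 / Gamma (1 - \<beta>)) * integral {s..b} (\<lambda>\<tau>. (\<tau> - s) powr (-\<beta>) * g \<tau>)" for g
      by (simp add: rRLI_def)
    show ?thesis unfolding Lr X by (simp only: right_diff_distrib mult.left_commute)
  qed
  have DF: "((\<lambda>s. rRLI (1 - \<beta>) b gF s) has_real_derivative deriv (\<lambda>s. rRLI (1 - \<beta>) b gF s) t) (at t)"
    using dF by (simp add: DERIV_deriv_iff_real_differentiable)
  have DG: "((\<lambda>s. rRLI (1 - \<beta>) b gG s) has_real_derivative deriv (\<lambda>s. rRLI (1 - \<beta>) b gG s) t) (at t)"
    using dG by (simp add: DERIV_deriv_iff_real_differentiable)
  have "((\<lambda>s. rRLI (1 - \<beta>) b gF s - lam * rRLI (1 - \<beta>) b gG s) has_real_derivative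
      deriv (\<lambda>s. rRLI (1 - \<beta>) b gF s) t - lam * deriv (\<lambda>s. rRLI (1 - \<beta>) b gG s) t) (at t)"
    by (intro DERIV_diff DERIV_cmult DF DG)
  then have "((\<lambda>s. rRLI (1 - \<beta>) b gH s) has_real_derivative
      deriv (\<lambda>s. rRLI (1 - \<beta>) b gF s) t - lam * deriv (\<lambda>s. rRLI (1 - \<beta>) b gG s) t) (at t)"
    by (rule has_field_derivative_transform_within_open[OF _ open_greaterThanLessThan t]) (simp add: Req)
  then have "deriv (\<lambda>s. rRLI (1 - \<beta>) b gH s) t = deriv (\<lambda>s. rRLI (1 - \<beta>) b gF s) t - lam * deriv (\<lambda>s. rRLI (1 - \<beta>) b gG s) t"
    by (rule DERIV_imp_deriv)
  then show ?thesis unfolding rRLD_def by simp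
qed

theorem mainTheorem13:
  fixes a b alpha beta xi ya yb :: real
    and F G :: "real \<Rightarrow> real \<Rightarrow> real \<Rightarrow> real"
    and y :: "real \<Rightarrow> real"
  assumes ab: "a < b"
    and alpha: "0 < alpha" "alpha < 1"
    and beta: "0 < beta" "beta < 1"
    and F_C1: "C1_3 {a..b} F"
    and G_C1: "C1_3 {a..b} G"
    and adm: "admissible a b alpha beta ya yb G xi y"
    and minimizer: "\<forall>z. admissible a b alpha beta ya yb G xi z \<longrightarrow>
        lRLI alpha a (\<lambda>t. F t (y t) (lCD beta a y t)) b
          \<le> lRLI alpha a (\<lambda>t. F t (z t) (lCD beta a z t)) b"
    and regularity: "\<forall>L\<in>{F, G}.
        let g = (\<lambda>t. (b - t) powr (alpha - 1) * d3 L t (y t) (lCD beta a y t)) in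
        continuous_on {a<..<b} (\<lambda>t. (b - t) powr (alpha - 1) * d2 L t (y t) (lCD beta a y t)) \<and>
        (\<forall>t\<in>{a<..<b}. (\<lambda>s. rRLI (1 - beta) b g s) differentiable (at t)) \<and>
        continuous_on {a<..<b} (rRLD beta b g) \<and>
        abs_cont_on a b (rRLI (1 - beta) b g) \<and>
        (((\<lambda>(t, \<tau>). ((t - \<tau>) powr (- beta) / Gamma (1 - beta))\<^sup>2)
             integrable_on {(t, \<tau>). a \<le> \<tau> \<and> \<tau> < t \<and> t \<le> b} \<and>
          g measurable_on {a..b} \<and> (\<lambda>t. (g t)\<^sup>2) integrable_on {a..b})
         \<or> continuous_on {a..b} g)"
    and not_extremal: "\<not> (\<forall>t\<in>{a<..<b}.
        (b - t) powr (alpha - 1) * d2 G t (y t) (lCD beta a y t)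
        + rRLD beta b (\<lambda>\<tau>. (b - \<tau>) powr (alpha - 1) * d3 G \<tau> (y \<tau>) (lCD beta a y \<tau>)) t = 0)"
  shows "\<exists>lam::real. \<forall>t\<in>{a<..<b}.
     (let H = (\<lambda>s x v. F s x v - lam * G s x v) in
      (b - t) powr (alpha - 1) * d2 H t (y t) (lCD beta a y t)
      + rRLD beta b (\<lambda>\<tau>. (b - \<tau>) powr (alpha - 1) * d3 H \<tau> (y \<tau>) (lCD beta a y \<tau>)) t = 0)"
  proof -
  from F_C1 obtain F1 F2 F3 where
    DF: "\<forall>t\<in>{a..b}. \<forall>x v. ((\<lambda>s. F s x v) has_real_derivative F1 t x v) (at t within {a..b}) \<and>
        ((\<lambda>z. F t z v) has_real_derivative F2 t x v) (at x) \<and> ((\<lambda>w. F t x w) has_real_derivative F3 t x v) (at v)"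
    and CF2: "continuous_on ({a..b} \<times> UNIV \<times> UNIV) (\<lambda>(t, x, v). F2 t x v)"
    and CF3: "continuous_on ({a..b} \<times> UNIV \<times> UNIV) (\<lambda>(t, x, v). F3 t x v)"
    unfolding C1_3_def by blast
  have DF1: "\<forall>t\<in>{a..b}. \<forall>x v. ((\<lambda>s. F s x v) has_real_derivative F1 t x v) (at t within {a..b})"
    and DF2: "\<forall>t\<in>{a..b}. \<forall>x v. ((\<lambda>z. F t z v) has_real_derivative F2 t x v) (at x)"
    and DF3: "\<forall>t\<in>{a..b}. \<forall>x v. ((\<lambda>w. F t x w) has_real_derivative F3 t x v) (at v)"
    using DF by blast+
  from G_C1 obtain G1 G2 G3 where
    DG: "\<forall>t\<in>{a..b}. \<forall>x v. ((\<lambda>s. G s x v) has_real_derivative G1 t x v) (at t within {a..b}) \<and>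
        ((\<lambda>z. G t z v) has_real_derivative G2 t x v) (at x) \<and> ((\<lambda>w. G t x w) has_real_derivative G3 t x v) (at v)"
    and CG2: "continuous_on ({a..b} \<times> UNIV \<times> UNIV) (\<lambda>(t, x, v). G2 t x v)"
    and CG3: "continuous_on ({a..b} \<times> UNIV \<times> UNIV) (\<lambda>(t, x, v). G3 t x v)"
    unfolding C1_3_def by blast
  have DG1: "\<forall>t\<in>{a..b}. \<forall>x v. ((\<lambda>s. G s x v) has_real_derivative G1 t x v) (at t within {a..b})"
    and DG2: "\<forall>t\<in>{a..b}. \<forall>x v. ((\<lambda>z. G t z v) has_real_derivative G2 t x v) (at x)"
    and DG3: "\<forall>t\<in>{a..b}. \<forall>x v. ((\<lambda>w. G t x w) has_real_derivative G3 t x v) (at v)"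
    using DG by blast+
  from adm obtain y' where dy: "\<forall>t\<in>{a..b}. (y has_real_derivative y' t) (at t within {a..b})"
    and cy': "continuous_on {a..b} y'" and cDY: "continuous_on {a..b} (lCD beta a y)"
    and ya: "y a = ya" and yb: "y b = yb" and yxi: "lRLI alpha a (\<lambda>t. G t (y t) (lCD beta a y t)) b = xi"
    unfolding admissible_def C1_interval_def by blast
  have cY: "continuous_on {a..b} y"
    unfolding continuous_on_eq_continuous_within using dy DERIV_continuous by blast
  define EF where "EF t = (b - t) powr (alpha - 1) * d2 F t (y t) (lCD beta a y t)
        + rRLD beta b (\<lambda>\<tau>. (b - \<tau>) powr (alpha - 1) * d3 F \<tau> (y \<tau>) (lCD beta a y \<tau>)) t" for t
  define EG where "EG t = (b - t) powr (alpha - 1) * d2 G t (y t) (lCD beta a y t)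
        + rRLD beta b (\<lambda>\<tau>. (b - \<tau>) powr (alpha - 1) * d3 G \<tau> (y \<tau>) (lCD beta a y \<tau>)) t" for t
  have regF: "continuous_on {a<..<b} (\<lambda>t. (b - t) powr (alpha - 1) * d2 F t (y t) (lCD beta a y t)) \<and>
        (\<forall>t\<in>{a<..<b}. (\<lambda>s. rRLI (1 - beta) b (\<lambda>t. (b - t) powr (alpha - 1) * d3 F t (y t) (lCD beta a y t)) s) differentiable (at t)) \<and>
        continuous_on {a<..<b} (rRLD beta b (\<lambda>t. (b - t) powr (alpha - 1) * d3 F t (y t) (lCD beta a y t)))"
    using bspec[OF regularity, of F] unfolding Let_def by blast
  have regG: "continuous_on {a<..<b} (\<lambda>t. (b - t) powr (alpha - 1) * d2 G t (y t) (lCD beta a y t)) \<and>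
        (\<forall>t\<in>{a<..<b}. (\<lambda>s. rRLI (1 - beta) b (\<lambda>t. (b - t) powr (alpha - 1) * d3 G t (y t) (lCD beta a y t)) s) differentiable (at t)) \<and>
        continuous_on {a<..<b} (rRLD beta b (\<lambda>t. (b - t) powr (alpha - 1) * d3 G t (y t) (lCD beta a y t)))"
    using bspec[OF regularity, of G] unfolding Let_def by blast
  have cEF: "continuous_on {a<..<b} EF"
  proof -
    have "continuous_on {a<..<b} (\<lambda>t. (b - t) powr (alpha - 1) * d2 F t (y t) (lCD beta a y t)
        + rRLD beta b (\<lambda>\<tau>. (b - \<tau>) powr (alpha - 1) * d3 F \<tau> (y \<tau>) (lCD beta a y \<tau>)) t)"
      using regF by (intro continuous_on_add) auto
    then show ?thesis unfolding EF_def .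
  qed
  have cEG: "continuous_on {a<..<b} EG"
  proof -
    have "continuous_on {a<..<b} (\<lambda>t. (b - t) powr (alpha - 1) * d2 G t (y t) (lCD beta a y t)
        + rRLD beta b (\<lambda>\<tau>. (b - \<tau>) powr (alpha - 1) * d3 G \<tau> (y \<tau>) (lCD beta a y \<tau>)) t)"
      using regG by (intro continuous_on_add) auto
    then show ?thesis unfolding EG_def .
  qed
  from not_extremal obtain t1 where t1: "t1 \<in> {a<..<b}" "EG t1 \<noteq> 0" unfolding EG_def by blast
  from bump_nonzero[OF cEG t1] obtain c0 r0 where b0: "r0 > 0" "a < c0 - r0" "c0 + r0 < b"
    and nz0: "integral {a..b} (\<lambda>t. bump c0 r0 t * EG t) \<noteq> 0" by blast
  define lin where "lin L2 L3 c r = integral {a..b} (\<lambda>t. (b - t) powr (alpha - 1) *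
      (L2 t (y t) (lCD beta a y t) * bump c r t + L3 t (y t) (lCD beta a y t) * lCD beta a (bump c r) t))"
    for L2 L3 :: "real \<Rightarrow> real \<Rightarrow> real \<Rightarrow> real" and c r
  have linF: "lin F2 F3 c r = integral {a..b} (\<lambda>t. bump c r t * EF t)" if "r > 0" "a < c - r" "c + r < b" for c r
    unfolding lin_def EF_def by (rule lin_identity[OF ab alpha beta DF2 DF3 CF2 CF3 cY cDY that]) (use regF in auto)
  have linG: "lin G2 G3 c r = integral {a..b} (\<lambda>t. bump c r t * EG t)" if "r > 0" "a < c - r" "c + r < b" for c r
    unfolding lin_def EG_def by (rule lin_identity[OF ab alpha beta DG2 DG3 CG2 CG3 cY cDY that]) (use regG in auto)
  define lam where "lam = lin F2 F3 c0 r0 / lin G2 G3 c0 r0"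
  have PG0: "lin G2 G3 c0 r0 \<noteq> 0" using nz0 linG[OF b0] by simp
  have Gam: "Gamma alpha > 0" using alpha by (simp add: Gamma_real_pos)
  have claim: "EF t - lam * EG t = 0" if t: "t \<in> {a<..<b}" for t
  proof (rule ccontr)
    assume ne: "EF t - lam * EG t \<noteq> 0"
    have cE: "continuous_on {a<..<b} (\<lambda>t. EF t - lam * EG t)" by (intro continuous_intros cEF cEG)
    obtain c1 r1 where b1: "r1 > 0" "a < c1 - r1" "c1 + r1 < b"
      and nz1: "integral {a..b} (\<lambda>t. bump c1 r1 t * (EF t - lam * EG t)) \<noteq> 0"
      using bump_nonzero[OF cE t ne] by blast
    have split: "integral {a..b} (\<lambda>t. bump c1 r1 t * (EF t - lam * EG t)) = lin F2 F3 c1 r1 - lam * lin G2 G3 c1 r1"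
    proof -
      have iF: "(\<lambda>t. bump c1 r1 t * EF t) integrable_on {a..b}" by (rule bump_prod_integrable[OF cEF b1])
      have iG: "(\<lambda>t. lam * (bump c1 r1 t * EG t)) integrable_on {a..b}"
        by (rule integrable_on_mult_right[OF bump_prod_integrable[OF cEG b1]])
      have "integral {a..b} (\<lambda>t. bump c1 r1 t * (EF t - lam * EG t)) = integral {a..b} (\<lambda>t. bump c1 r1 t * EF t - lam * (bump c1 r1 t * EG t))"
        by (simp only: right_diff_distrib mult.left_commute)
      also have "\<dots> = integral {a..b} (\<lambda>t. bump c1 r1 t * EF t) - lam * integral {a..b} (\<lambda>t. bump c1 r1 t * EG t)"
        by (simp only: integral_diff[OF iF iG] integral_mult_right)
      finally show ?thesis using linF[OF b1] linG[OF b1] by simp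
    qed
    define z where "z e1 e2 = (\<lambda>s. y s + e1 * bump c1 r1 s + e2 * bump c0 r0 s)" for e1 e2
    define \<phi> where "\<phi> e1 e2 = lRLI alpha a (\<lambda>t. F t (z e1 e2 t) (lCD beta a (z e1 e2) t)) b" for e1 e2
    define \<psi> where "\<psi> e1 e2 = lRLI alpha a (\<lambda>t. G t (z e1 e2 t) (lCD beta a (z e1 e2) t)) b" for e1 e2
    define \<phi>0 where "\<phi>0 = lRLI alpha a (\<lambda>t. F t (y t) (lCD beta a y t)) b"
    have lCDz: "lCD beta a (z e1 e2) t = lCD beta a y t + e1 * lCD beta a (bump c1 r1) t + e2 * lCD beta a (bump c0 r0) t"
      if "t \<in> {a..b}" for e1 e2 t
      unfolding z_def by (rule lCD_lin[OF ab beta dy cy' that])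
    have Leq: "lRLI alpha a (\<lambda>t. L t (z e1 e2 t) (lCD beta a (z e1 e2) t)) b
        = (1 / Gamma alpha) * integral {a..b} (\<lambda>t. (b - t) powr (alpha - 1) * L t (y t + e1 * bump c1 r1 t + e2 * bump c0 r0 t)
            (lCD beta a y t + e1 * lCD beta a (bump c1 r1) t + e2 * lCD beta a (bump c0 r0) t))"
      for L :: "real \<Rightarrow> real \<Rightarrow> real \<Rightarrow> real" and e1 e2
    proof -
      have "integral {a..b} (\<lambda>t. (b - t) powr (alpha - 1) * L t (z e1 e2 t) (lCD beta a (z e1 e2) t))
          = integral {a..b} (\<lambda>t. (b - t) powr (alpha - 1) * L t (y t + e1 * bump c1 r1 t + e2 * bump c0 r0 t)
            (lCD beta a y t + e1 * lCD beta a (bump c1 r1) t + e2 * lCD beta a (bump c0 r0) t))"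
      proof (rule integral_cong)
        fix x assume x: "x \<in> {a..b}"
        show "(b - x) powr (alpha - 1) * L x (z e1 e2 x) (lCD beta a (z e1 e2) x)
          = (b - x) powr (alpha - 1) * L x (y x + e1 * bump c1 r1 x + e2 * bump c0 r0 x)
            (lCD beta a y x + e1 * lCD beta a (bump c1 r1) x + e2 * lCD beta a (bump c0 r0) x)"
          by (subst lCDz[OF x]) (simp add: z_def)
      qed
      then show ?thesis unfolding lRLI_def by simp
    qed
    have L0: "lRLI alpha a (\<lambda>t. L t (y t) (lCD beta a y t)) b
        = (1 / Gamma alpha) * integral {a..b} (\<lambda>t. (b - t) powr (alpha - 1) * L t (y t) (lCD beta a y t))"
      for L :: "real \<Rightarrow> real \<Rightarrow> real \<Rightarrow> real"
      unfolding lRLI_def by simp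
    have cb1: "continuous_on {a..b} (bump c1 r1)" and cb0: "continuous_on {a..b} (bump c0 r0)"
      by (rule continuous_on_subset[OF bump_cont]; simp)+
    have cD1: "continuous_on {a..b} (lCD beta a (bump c1 r1))" by (rule lCD_bump_cont) (use ab beta b1 in auto)
    have cD0: "continuous_on {a..b} (lCD beta a (bump c0 r0))" by (rule lCD_bump_cont) (use ab beta b0 in auto)
    have exp_scale: "\<exists>\<delta>>0. \<forall>e1 e2. \<bar>e1\<bar> + \<bar>e2\<bar> < \<delta> \<longrightarrow>
        \<bar>lRLI alpha a (\<lambda>t. L t (z e1 e2 t) (lCD beta a (z e1 e2) t)) b - lRLI alpha a (\<lambda>t. L t (y t) (lCD beta a y t)) b
         - lin L2 L3 c1 r1 / Gamma alpha * e1 - lin L2 L3 c0 r0 / Gamma alpha * e2\<bar> \<le> \<epsilon> * (\<bar>e1\<bar> + \<bar>e2\<bar>)"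
      if e: "\<epsilon> > 0"
        and D1: "\<forall>t\<in>{a..b}. \<forall>x v. ((\<lambda>s. L s x v) has_real_derivative L1 t x v) (at t within {a..b})"
        and D2: "\<forall>t\<in>{a..b}. \<forall>x v. ((\<lambda>z. L t z v) has_real_derivative L2 t x v) (at x)"
        and D3: "\<forall>t\<in>{a..b}. \<forall>x v. ((\<lambda>w. L t x w) has_real_derivative L3 t x v) (at v)"
        and C2: "continuous_on ({a..b} \<times> UNIV \<times> UNIV) (\<lambda>(t, x, v). L2 t x v)"
        and C3: "continuous_on ({a..b} \<times> UNIV \<times> UNIV) (\<lambda>(t, x, v). L3 t x v)"
      for \<epsilon> and L L1 L2 L3 :: "real \<Rightarrow> real \<Rightarrow> real \<Rightarrow> real"
    proof -
      have eG: "\<epsilon> * Gamma alpha > 0" using e Gam by simp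
      obtain \<delta> where \<delta>: "\<delta> > 0" and dd: "\<And>e1 e2. \<bar>e1\<bar> + \<bar>e2\<bar> < \<delta> \<Longrightarrow>
        \<bar>integral {a..b} (\<lambda>t. (b - t) powr (alpha - 1) * L t (y t + e1 * bump c1 r1 t + e2 * bump c0 r0 t)
            (lCD beta a y t + e1 * lCD beta a (bump c1 r1) t + e2 * lCD beta a (bump c0 r0) t))
         - integral {a..b} (\<lambda>t. (b - t) powr (alpha - 1) * L t (y t) (lCD beta a y t))
         - lin L2 L3 c1 r1 * e1 - lin L2 L3 c0 r0 * e2\<bar> \<le> (\<epsilon> * Gamma alpha) * (\<bar>e1\<bar> + \<bar>e2\<bar>)"
        using expansion[OF ab alpha(1) D1 D2 D3 C2 C3 cY cDY cb1 cb0 cD1 cD0 eG] unfolding lin_def by blast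
      show ?thesis
      proof (intro exI[of _ \<delta>] conjI allI impI \<delta>)
        fix e1 e2 :: real assume s: "\<bar>e1\<bar> + \<bar>e2\<bar> < \<delta>"
        define X where "X = integral {a..b} (\<lambda>t. (b - t) powr (alpha - 1) * L t (y t + e1 * bump c1 r1 t + e2 * bump c0 r0 t)
            (lCD beta a y t + e1 * lCD beta a (bump c1 r1) t + e2 * lCD beta a (bump c0 r0) t))"
        define X0 where "X0 = integral {a..b} (\<lambda>t. (b - t) powr (alpha - 1) * L t (y t) (lCD beta a y t))"
        have "\<bar>X - X0 - lin L2 L3 c1 r1 * e1 - lin L2 L3 c0 r0 * e2\<bar> \<le> (\<epsilon> * Gamma alpha) * (\<bar>e1\<bar> + \<bar>e2\<bar>)"
          using dd[OF s] unfolding X_def X0_def .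
        moreover have "lRLI alpha a (\<lambda>t. L t (z e1 e2 t) (lCD beta a (z e1 e2) t)) b - lRLI alpha a (\<lambda>t. L t (y t) (lCD beta a y t)) b
         - lin L2 L3 c1 r1 / Gamma alpha * e1 - lin L2 L3 c0 r0 / Gamma alpha * e2
           = (X - X0 - lin L2 L3 c1 r1 * e1 - lin L2 L3 c0 r0 * e2) / Gamma alpha"
          unfolding Leq L0 X_def[symmetric] X0_def[symmetric] by (simp add: diff_divide_distrib)
        ultimately show "\<bar>lRLI alpha a (\<lambda>t. L t (z e1 e2 t) (lCD beta a (z e1 e2) t)) b - lRLI alpha a (\<lambda>t. L t (y t) (lCD beta a y t)) b
         - lin L2 L3 c1 r1 / Gamma alpha * e1 - lin L2 L3 c0 r0 / Gamma alpha * e2\<bar> \<le> \<epsilon> * (\<bar>e1\<bar> + \<bar>e2\<bar>)"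
          using Gam by (simp add: abs_divide divide_le_eq mult_ac)
      qed
    qed
    have Jexp: "\<exists>\<delta>>0. \<forall>e1 e2. \<bar>e1\<bar> + \<bar>e2\<bar> < \<delta> \<longrightarrow> \<bar>\<phi> e1 e2 - \<phi>0 - lin F2 F3 c1 r1 / Gamma alpha * e1 - lin F2 F3 c0 r0 / Gamma alpha * e2\<bar> \<le> \<epsilon> * (\<bar>e1\<bar> + \<bar>e2\<bar>)"
      if "\<epsilon> > 0" for \<epsilon>
      using exp_scale[OF that DF1 DF2 DF3 CF2 CF3] unfolding \<phi>_def \<phi>0_def .
    have Iexp: "\<exists>\<delta>>0. \<forall>e1 e2. \<bar>e1\<bar> + \<bar>e2\<bar> < \<delta> \<longrightarrow> \<bar>\<psi> e1 e2 - xi - lin G2 G3 c1 r1 / Gamma alpha * e1 - lin G2 G3 c0 r0 / Gamma alpha * e2\<bar> \<le> \<epsilon> * (\<bar>e1\<bar> + \<bar>e2\<bar>)"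
      if "\<epsilon> > 0" for \<epsilon>
      using exp_scale[OF that DG1 DG2 DG3 CG2 CG3] unfolding \<psi>_def yxi .
    have cont: "continuous_on UNIV (\<psi> e1)" for e1
    proof -
      have "continuous_on UNIV (\<lambda>e2. integral {a..b} (\<lambda>t. (b - t) powr (alpha - 1) * G t (y t + e1 * bump c1 r1 t + e2 * bump c0 r0 t)
            (lCD beta a y t + e1 * lCD beta a (bump c1 r1) t + e2 * lCD beta a (bump c0 r0) t)))"
        by (rule expansion_cont[OF ab alpha(1) DG1 DG2 DG3 CG2 CG3 cY cDY cb1 cb0 cD1 cD0])
      then have "continuous_on UNIV (\<lambda>e2. (1 / Gamma alpha) * integral {a..b} (\<lambda>t. (b - t) powr (alpha - 1) * G t (y t + e1 * bump c1 r1 t + e2 * bump c0 r0 t)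
            (lCD beta a y t + e1 * lCD beta a (bump c1 r1) t + e2 * lCD beta a (bump c0 r0) t)))"
        by (rule continuous_on_mult_left)
      moreover have "\<psi> e1 = (\<lambda>e2. (1 / Gamma alpha) * integral {a..b} (\<lambda>t. (b - t) powr (alpha - 1) * G t (y t + e1 * bump c1 r1 t + e2 * bump c0 r0 t)
            (lCD beta a y t + e1 * lCD beta a (bump c1 r1) t + e2 * lCD beta a (bump c0 r0) t)))"
        by (rule ext) (simp only: \<psi>_def Leq)
      ultimately show ?thesis by simp
    qed
    have minim: "\<phi>0 \<le> \<phi> e1 e2" if "\<psi> e1 e2 = xi" for e1 e2
    proof -
      have bz: "bump c r a = 0" "bump c r b = 0" if "r > 0" "a < c - r" "c + r < b" for c r
        using bump_zero[of r a c] bump_zero[of r b c] that by auto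
      have "admissible a b alpha beta ya yb G xi (z e1 e2)"
        unfolding admissible_def
      proof (intro conjI)
        show "C1_interval a b (z e1 e2)"
          unfolding C1_interval_def
        proof (intro exI[of _ "\<lambda>t. y' t + e1 * bumpd c1 r1 t + e2 * bumpd c0 r0 t"] conjI ballI)
          fix t assume tt: "t \<in> {a..b}"
          show "(z e1 e2 has_real_derivative y' t + e1 * bumpd c1 r1 t + e2 * bumpd c0 r0 t) (at t within {a..b})"
            unfolding z_def using dy tt
            by (intro DERIV_add DERIV_cmult has_field_derivative_at_within[OF bump_deriv]) auto
        next
          show "continuous_on {a..b} (\<lambda>t. y' t + e1 * bumpd c1 r1 t + e2 * bumpd c0 r0 t)"
            by (intro continuous_intros cy' continuous_on_subset[OF bumpd_cont]) auto
        qed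
        have "continuous_on {a..b} (\<lambda>t. lCD beta a y t + e1 * lCD beta a (bump c1 r1) t + e2 * lCD beta a (bump c0 r0) t)"
          by (intro continuous_intros cDY cD1 cD0)
        then show "continuous_on {a..b} (lCD beta a (z e1 e2))"
          by (rule continuous_on_eq) (simp add: lCDz)
        show "z e1 e2 a = ya" using bz[OF b1] bz[OF b0] ya by (simp add: z_def)
        show "z e1 e2 b = yb" using bz[OF b1] bz[OF b0] yb by (simp add: z_def)
        show "lRLI alpha a (\<lambda>t. G t (z e1 e2 t) (lCD beta a (z e1 e2) t)) b = xi" using that unfolding \<psi>_def .
      qed
      from minimizer[rule_format, OF this] show ?thesis unfolding \<phi>0_def \<phi>_def .
    qed
    have p2: "lin G2 G3 c0 r0 / Gamma alpha \<noteq> 0" using PG0 Gam by simp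
    have "lin F2 F3 c1 r1 / Gamma alpha * (lin G2 G3 c0 r0 / Gamma alpha) = lin F2 F3 c0 r0 / Gamma alpha * (lin G2 G3 c1 r1 / Gamma alpha)"
      by (rule lagrange2[OF Jexp Iexp cont minim p2])
    then have "lin F2 F3 c1 r1 * lin G2 G3 c0 r0 = lin F2 F3 c0 r0 * lin G2 G3 c1 r1"
      using Gam by (simp add: field_simps)
    then have "lin F2 F3 c1 r1 - lam * lin G2 G3 c1 r1 = 0"
      using PG0 unfolding lam_def by (simp add: field_simps)
    with split nz1 show False by simp
  qed
  show ?thesis
  proof (intro exI[of _ lam] ballI)
    fix t assume t: "t \<in> {a<..<b}"
    define H where "H = (\<lambda>s x v. F s x v - lam * G s x v)"
    have d2H: "d2 H \<tau> (y \<tau>) (lCD beta a y \<tau>) = d2 F \<tau> (y \<tau>) (lCD beta a y \<tau>) - lam * d2 G \<tau> (y \<tau>) (lCD beta a y \<tau>)"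
      if "\<tau> \<in> {a..b}" for \<tau>
    proof -
      have f: "d2 F \<tau> (y \<tau>) (lCD beta a y \<tau>) = F2 \<tau> (y \<tau>) (lCD beta a y \<tau>)"
        unfolding d2_def by (rule DERIV_imp_deriv) (use DF2 that in blast)
      have g: "d2 G \<tau> (y \<tau>) (lCD beta a y \<tau>) = G2 \<tau> (y \<tau>) (lCD beta a y \<tau>)"
        unfolding d2_def by (rule DERIV_imp_deriv) (use DG2 that in blast)
      have "d2 H \<tau> (y \<tau>) (lCD beta a y \<tau>) = F2 \<tau> (y \<tau>) (lCD beta a y \<tau>) - lam * G2 \<tau> (y \<tau>) (lCD beta a y \<tau>)"
      proof -
        have hF: "((\<lambda>z. F \<tau> z (lCD beta a y \<tau>)) has_real_derivative F2 \<tau> (y \<tau>) (lCD beta a y \<tau>)) (at (y \<tau>))"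
          using DF2 that by blast
        have hG: "((\<lambda>z. G \<tau> z (lCD beta a y \<tau>)) has_real_derivative G2 \<tau> (y \<tau>) (lCD beta a y \<tau>)) (at (y \<tau>))"
          using DG2 that by blast
        show ?thesis unfolding d2_def H_def by (rule DERIV_imp_deriv[OF DERIV_diff[OF hF DERIV_cmult[OF hG]]])
      qed
      then show ?thesis using f g by simp
    qed
    have d3H: "d3 H \<tau> (y \<tau>) (lCD beta a y \<tau>) = d3 F \<tau> (y \<tau>) (lCD beta a y \<tau>) - lam * d3 G \<tau> (y \<tau>) (lCD beta a y \<tau>)"
      if "\<tau> \<in> {a..b}" for \<tau>
    proof -
      have f: "d3 F \<tau> (y \<tau>) (lCD beta a y \<tau>) = F3 \<tau> (y \<tau>) (lCD beta a y \<tau>)"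
        unfolding d3_def by (rule DERIV_imp_deriv) (use DF3 that in blast)
      have g: "d3 G \<tau> (y \<tau>) (lCD beta a y \<tau>) = G3 \<tau> (y \<tau>) (lCD beta a y \<tau>)"
        unfolding d3_def by (rule DERIV_imp_deriv) (use DG3 that in blast)
      have "d3 H \<tau> (y \<tau>) (lCD beta a y \<tau>) = F3 \<tau> (y \<tau>) (lCD beta a y \<tau>) - lam * G3 \<tau> (y \<tau>) (lCD beta a y \<tau>)"
      proof -
        have hF: "((\<lambda>w. F \<tau> (y \<tau>) w) has_real_derivative F3 \<tau> (y \<tau>) (lCD beta a y \<tau>)) (at (lCD beta a y \<tau>))"
          using DF3 that by blast
        have hG: "((\<lambda>w. G \<tau> (y \<tau>) w) has_real_derivative G3 \<tau> (y \<tau>) (lCD beta a y \<tau>)) (at (lCD beta a y \<tau>))"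
          using DG3 that by blast
        show ?thesis unfolding d3_def H_def by (rule DERIV_imp_deriv[OF DERIV_diff[OF hF DERIV_cmult[OF hG]]])
      qed
      then show ?thesis using f g by simp
    qed
    have d3F: "d3 F \<tau> (y \<tau>) (lCD beta a y \<tau>) = F3 \<tau> (y \<tau>) (lCD beta a y \<tau>)" if "\<tau> \<in> {a..b}" for \<tau>
      unfolding d3_def by (rule DERIV_imp_deriv) (use DF3 that in blast)
    have d3G: "d3 G \<tau> (y \<tau>) (lCD beta a y \<tau>) = G3 \<tau> (y \<tau>) (lCD beta a y \<tau>)" if "\<tau> \<in> {a..b}" for \<tau>
      unfolding d3_def by (rule DERIV_imp_deriv) (use DG3 that in blast)
    have rH: "rRLD beta b (\<lambda>\<tau>. (b - \<tau>) powr (alpha - 1) * d3 H \<tau> (y \<tau>) (lCD beta a y \<tau>)) t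
        = rRLD beta b (\<lambda>\<tau>. (b - \<tau>) powr (alpha - 1) * d3 F \<tau> (y \<tau>) (lCD beta a y \<tau>)) t
          - lam * rRLD beta b (\<lambda>\<tau>. (b - \<tau>) powr (alpha - 1) * d3 G \<tau> (y \<tau>) (lCD beta a y \<tau>)) t"
    proof (rule rRLD_diff[OF ab alpha beta t])
      show "\<And>\<tau>. \<tau> \<in> {a..b} \<Longrightarrow> (b - \<tau>) powr (alpha - 1) * d3 H \<tau> (y \<tau>) (lCD beta a y \<tau>)
          = (b - \<tau>) powr (alpha - 1) * d3 F \<tau> (y \<tau>) (lCD beta a y \<tau>) - lam * ((b - \<tau>) powr (alpha - 1) * d3 G \<tau> (y \<tau>) (lCD beta a y \<tau>))"
        by (simp only: d3H right_diff_distrib mult.left_commute)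
      show "\<And>\<tau>. \<tau> \<in> {a..b} \<Longrightarrow> (b - \<tau>) powr (alpha - 1) * d3 F \<tau> (y \<tau>) (lCD beta a y \<tau>) = (b - \<tau>) powr (alpha - 1) * F3 \<tau> (y \<tau>) (lCD beta a y \<tau>)"
        using d3F by simp
      show "\<And>\<tau>. \<tau> \<in> {a..b} \<Longrightarrow> (b - \<tau>) powr (alpha - 1) * d3 G \<tau> (y \<tau>) (lCD beta a y \<tau>) = (b - \<tau>) powr (alpha - 1) * G3 \<tau> (y \<tau>) (lCD beta a y \<tau>)"
        using d3G by simp
      show "continuous_on {a..b} (\<lambda>\<tau>. F3 \<tau> (y \<tau>) (lCD beta a y \<tau>))" by (rule curve_cont_L2[OF CF3 cY cDY])
      show "continuous_on {a..b} (\<lambda>\<tau>. G3 \<tau> (y \<tau>) (lCD beta a y \<tau>))" by (rule curve_cont_L2[OF CG3 cY cDY])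
      show "(\<lambda>s. rRLI (1 - beta) b (\<lambda>\<tau>. (b - \<tau>) powr (alpha - 1) * d3 F \<tau> (y \<tau>) (lCD beta a y \<tau>)) s) differentiable at t"
        using regF t by blast
      show "(\<lambda>s. rRLI (1 - beta) b (\<lambda>\<tau>. (b - \<tau>) powr (alpha - 1) * d3 G \<tau> (y \<tau>) (lCD beta a y \<tau>)) s) differentiable at t"
        using regG t by blast
    qed
    have tab: "t \<in> {a..b}" using t by auto
    have "(b - t) powr (alpha - 1) * d2 H t (y t) (lCD beta a y t)
        + rRLD beta b (\<lambda>\<tau>. (b - \<tau>) powr (alpha - 1) * d3 H \<tau> (y \<tau>) (lCD beta a y \<tau>)) t = EF t - lam * EG t"
      unfolding rH d2H[OF tab] EF_def EG_def by (simp add: algebra_simps)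
    also have "\<dots> = 0" by (rule claim[OF t])
    finally show "let H = (\<lambda>s x v. F s x v - lam * G s x v) in
      (b - t) powr (alpha - 1) * d2 H t (y t) (lCD beta a y t)
      + rRLD beta b (\<lambda>\<tau>. (b - \<tau>) powr (alpha - 1) * d3 H \<tau> (y \<tau>) (lCD beta a y \<tau>)) t = 0"
      unfolding H_def Let_def .
  qed
qed

end
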